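(* In the setting of the context, with $0<p_{A|X}(x)<1$ for all $x$, let $U=\{U_1,\dots,U_L\}$ be a partition of $[n]$ that is conditionally independent of $Y_{1:n}$ given $(X_{1:n},A_{1:n})$ and is a function of $(B_{1:n},A_{1:n})$ and independent randomness. For each $l$ with $N_l^0=|U_l\cap I_{A=0}|\ge1$, let $\hat C^l$ be the set $\hat C^{\mathrm{pro}}$ (defined in the context) computed from the data indexed by $U_l\cup I_{A=1}$ only (all bin counts and $N^{(0)}$ computed within this subset, with the same bins $D_k$). For $i\in I_{A=0}$ let $l_i$ be the index with $i\in U_{l_i}$ and set $\hat C^{\mathrm{pro}}_U(X_i,i)=\hat C^{l_i}(X_i)$. Then $$\mathbb E\Big[\frac{1}{N^{(0)}}\sum_{i\in I_{A=0}}\mathbf 1\{Y_i\in\hat C^{\mathrm{pro}}_U(X_i,i)\}\ \Big|\ B_{1:n},A_{1:n}\Big]\ge1-\alpha-\varepsilon.$$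
   Context: Missing-at-random setting: $(X_i,Y_i,A_i)_{1\le i\le n}$ i.i.d. with $X\sim P_X$, $Y\mid X\sim P_{Y|X}$, $A\mid X\sim\mathrm{Bernoulli}(p_{A|X}(X))$, $A\perp Y\mid X$; observed data $(X_i,A_i,Y_iA_i)$; $p_{A|X}(x)=\mathbb P(A=1|X=x)$. $I_{A=0}=\{i:A_i=0\}$, $I_{A=1}=\{i:A_i=1\}$, $N^{(0)}=|I_{A=0}|$. $s$ is a fixed measurable score, $S_i=s(X_i,Y_i)$. Discretization: $\varepsilon>0$, $z_k=(1+\varepsilon)^k/(1+(1+\varepsilon)^k)$, $D_k=\{x:p_{A|X}(x)\in[z_k,z_{k+1})\}$, $B_i$ = the $k$ with $X_i\in D_k$. For a dataset with bins $B'_1,\dots,B'_M$ (distinct values of the $B_i$ present), $I_k^{\mathcal B}$, $I_k^{\mathcal B,0}$, $I_k^{\mathcal B,1}$ are the indices in bin $k$, those with $A=0$, those with $A=1$, with sizes $N_k^{\mathcal B},N_k^{\mathcal B,0}$; then $\hat C^{\mathrm{pro}}(x)=\{y:s(x,y)\le Q_{1-\alpha}(\sum_k\sum_{i\in I_k^{\mathcal B,1}}\frac{N_k^{\mathcal B,0}}{N^{(0)}N_k^{\mathcal B}}\delta_{S_i}+\frac1{N^{(0)}}\sum_k\frac{(N_k^{\mathcal B,0})^2}{N_k^{\mathcal B}}\delta_{+\infty})\}$, where $Q_{1-\alpha}(P)=\inf\{t:\mathbb P_{T\sim P}(T\le t)\ge1-\alpha\}$. Coverage proportions over empty index sets are $1$.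 *)

theory Defs
  imports "HOL-Probability.Probability"
begin

definition zgrid :: "real \<Rightarrow> int \<Rightarrow> real" where
  "zgrid eps k = (1 + eps) powi k / (1 + (1 + eps) powi k)"

definition bin_of :: "real \<Rightarrow> real \<Rightarrow> int" where
  "bin_of eps q = (THE k. zgrid eps k \<le> q \<and> q < zgrid eps (k + 1))"

definition Nbin :: "nat set \<Rightarrow> (nat \<Rightarrow> int) \<Rightarrow> int \<Rightarrow> nat" where
  "Nbin J b k = card {i \<in> J. b i = k}"

definition Nbin0 :: "nat set \<Rightarrow> (nat \<Rightarrow> int) \<Rightarrow> (nat \<Rightarrow> bool) \<Rightarrow> int \<Rightarrow> nat" where
  "Nbin0 J b a k = card {i \<in> J. b i = k \<and> \<not> a i}"

definition Nzero :: "nat set \<Rightarrow> (nat \<Rightarrow> bool) \<Rightarrow> nat" where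
  "Nzero J a = card {i \<in> J. \<not> a i}"

text \<open>CDF t |-> P(T <= t) of the weighted empirical distribution in the definition of C^pro,
  computed from the data indexed by J; S are the scores (only used for indices with a i).\<close>
definition pro_cdf :: "nat set \<Rightarrow> (nat \<Rightarrow> int) \<Rightarrow> (nat \<Rightarrow> bool) \<Rightarrow> (nat \<Rightarrow> real) \<Rightarrow> ereal \<Rightarrow> real" where
  "pro_cdf J b a S t =
     (\<Sum>i\<in>{i \<in> J. a i}. if ereal (S i) \<le> t
        then real (Nbin0 J b a (b i)) / (real (Nzero J a) * real (Nbin J b (b i))) else 0)
   + (if \<infinity> \<le> t then (1 / real (Nzero J a)) *
        (\<Sum>k\<in>b ` J. real (Nbin0 J b a k) ^ 2 / real (Nbin J b k)) else 0)"

definition pro_thr :: "real \<Rightarrow> nat set \<Rightarrow> (nat \<Rightarrow> int) \<Rightarrow> (nat \<Rightarrow> bool) \<Rightarrow> (nat \<Rightarrow> real) \<Rightarrow> ereal" where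
  "pro_thr alpha J b a S = Inf {t. pro_cdf J b a S t \<ge> 1 - alpha}"

definition C_pro :: "real \<Rightarrow> nat set \<Rightarrow> (nat \<Rightarrow> int) \<Rightarrow> (nat \<Rightarrow> bool) \<Rightarrow> (nat \<Rightarrow> real)
    \<Rightarrow> ('x \<Rightarrow> 'y \<Rightarrow> real) \<Rightarrow> 'x \<Rightarrow> 'y set" where
  "C_pro alpha J b a S s x = {y. ereal (s x y) \<le> pro_thr alpha J b a S}"

text \<open>Coverage proportion over I_{A=0} of the partition-based sets C^pro_U, where the partition
  U of {..<n} is given by labels lab (U_l = {j<n. lab j = l}). Empty I_{A=0} gives 1.\<close>
definition cov_U :: "real \<Rightarrow> nat \<Rightarrow> (nat \<Rightarrow> nat) \<Rightarrow> (nat \<Rightarrow> int) \<Rightarrow> (nat \<Rightarrow> bool)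
    \<Rightarrow> ('x \<Rightarrow> 'y \<Rightarrow> real) \<Rightarrow> (nat \<Rightarrow> 'x) \<Rightarrow> (nat \<Rightarrow> 'y) \<Rightarrow> real" where
  "cov_U alpha n lab b a s X Y =
    (let I0 = {i \<in> {..<n}. \<not> a i}; I1 = {i \<in> {..<n}. a i}; S = (\<lambda>i. s (X i) (Y i)) in
     if I0 = {} then 1
     else (1 / real (card I0)) *
       (\<Sum>i\<in>I0. if Y i \<in> C_pro alpha ({j \<in> {..<n}. lab j = lab i} \<union> I1) b a S s (X i)
                  then 1 else 0))"

end

theory Submission
  imports Defs
begin


lemma zgrid_le_iff:
  fixes eps q :: real
  assumes q: "0 < q" "q < 1" and e: "0 < eps"
  shows "zgrid eps k \<le> q \<longleftrightarrow> (1 + eps) powi k \<le> q / (1 - q)"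
  and "q < zgrid eps k \<longleftrightarrow> q / (1 - q) < (1 + eps) powi k"
proof -
  define T where "T = (1 + eps) powi k"
  have T: "T > 0" unfolding T_def using e by (intro zero_less_power_int) auto
  show "zgrid eps k \<le> q \<longleftrightarrow> (1 + eps) powi k \<le> q / (1 - q)"
    using q T unfolding zgrid_def T_def[symmetric] by (auto simp: field_simps)
  show "q < zgrid eps k \<longleftrightarrow> q / (1 - q) < (1 + eps) powi k"
    using q T unfolding zgrid_def T_def[symmetric] by (auto simp: field_simps)
qed

lemma bin_exists:
  fixes eps q :: real
  assumes q: "0 < q" "q < 1" and e: "0 < eps"
  shows "\<exists>k. (1 + eps) powi k \<le> q / (1 - q) \<and> q / (1 - q) < (1 + eps) powi (k + 1)"
proof -
  define L where "L = ln (1 + eps)"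
  define r where "r = q / (1 - q)"
  have L: "L > 0" unfolding L_def using e by simp
  have r: "r > 0" unfolding r_def using q by simp
  define k where "k = floor (ln r / L)"
  have pw: "(1 + eps) powi m = exp (real_of_int m * L)" for m
    using e unfolding L_def by (simp add: powr_real_of_int'[symmetric] powr_def)
  have "real_of_int k * L \<le> ln r"
    using L unfolding k_def by (metis floor_divide_lower)
  then have 1: "(1 + eps) powi k \<le> r" unfolding pw using r
    by (metis exp_le_cancel_iff exp_ln)
  have "ln r < real_of_int (k + 1) * L"
    using L unfolding k_def by (metis floor_divide_upper of_int_1 of_int_add)
  then have 2: "r < (1 + eps) powi (k + 1)" unfolding pw using r
    by (metis exp_less_cancel_iff exp_ln)
  show ?thesis using 1 2 unfolding r_def by blast
qed

lemma bin_unique: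
  fixes eps r :: real
  assumes e: "0 < eps"
    and "(1 + eps) powi k \<le> r" "r < (1 + eps) powi (k + 1)"
    and "(1 + eps) powi k' \<le> r" "r < (1 + eps) powi (k' + 1)"
  shows "k = k'"
proof (rule ccontr)
  assume "k \<noteq> k'"
  then consider "k + 1 \<le> k'" | "k' + 1 \<le> k" by linarith
  then show False
  proof cases
    case 1
    have "(1 + eps) powi (k + 1) \<le> (1 + eps) powi k'"
      using 1 e by (intro power_int_increasing) auto
    then show False using assms by linarith
  next
    case 2
    have "(1 + eps) powi (k' + 1) \<le> (1 + eps) powi k"
      using 2 e by (intro power_int_increasing) auto
    then show False using assms by linarith
  qed
qed

lemma bin_of_iff:
  fixes eps q :: real
  assumes q: "0 < q" "q < 1" and e: "0 < eps"
  shows "bin_of eps q = k \<longleftrightarrow> (1 + eps) powi k \<le> q / (1 - q) \<and> q / (1 - q) < (1 + eps) powi (k + 1)"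
proof -
  have iff: "(zgrid eps m \<le> q \<and> q < zgrid eps (m + 1)) \<longleftrightarrow>
     ((1 + eps) powi m \<le> q / (1 - q) \<and> q / (1 - q) < (1 + eps) powi (m + 1))" for m
    using zgrid_le_iff[OF q e] by simp
  obtain k0 where k0: "(1 + eps) powi k0 \<le> q / (1 - q) \<and> q / (1 - q) < (1 + eps) powi (k0 + 1)"
    using bin_exists[OF q e] by blast
  have "bin_of eps q = k0"
    unfolding bin_of_def iff
    by (rule the_equality) (use k0 bin_unique[OF e] in blast)+
  then show ?thesis using k0 bin_unique[OF e] by blast
qed

lemma bin_ratio:
  fixes eps q :: real
  assumes e: "0 < eps" and q: "0 < q" "q < 1" and q': "0 < q'" "q' < 1"
    and "bin_of eps q = k" "bin_of eps q' = k"
  shows "(1 - q) * q' \<le> (1 + eps) * ((1 - q') * q)"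
proof -
  have a: "(1 + eps) powi k \<le> q / (1 - q)" using assms bin_of_iff[OF q e] by blast
  have b: "q' / (1 - q') < (1 + eps) powi (k + 1)" using assms bin_of_iff[OF q' e] by blast
  have c: "(1 + eps) powi (k + 1) = (1 + eps) * (1 + eps) powi k"
    using e by (simp add: power_int_add)
  have "q' / (1 - q') \<le> (1 + eps) * (q / (1 - q))"
    using a b c e by (smt (verit) mult_left_mono)
  then show ?thesis using q q' e by (simp add: field_simps)
qed

lemma bin_of_measurable:
  assumes e: "0 < eps" and p: "p \<in> borel_measurable MX" and pr: "\<And>x. 0 < p x \<and> p x < 1"
  shows "(\<lambda>x. bin_of eps (p x)) \<in> measurable MX (count_space UNIV)"
proof (subst measurable_count_space_eq2_countable, safe)
  fix k :: int
  have "(\<lambda>x. bin_of eps (p x)) -` {k} \<inter> space MX =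
    {x \<in> space MX. (1 + eps) powi k \<le> p x / (1 - p x) \<and> p x / (1 - p x) < (1 + eps) powi (k + 1)}"
    using bin_of_iff[OF _ _ e] pr by auto
  also have "\<dots> \<in> sets MX" using p by measurable
  finally show "(\<lambda>x. bin_of eps (p x)) -` {k} \<inter> space MX \<in> sets MX" .
qed auto


definition wgt :: "nat set \<Rightarrow> (nat \<Rightarrow> int) \<Rightarrow> (nat \<Rightarrow> bool) \<Rightarrow> nat \<Rightarrow> real" where
  "wgt J b a q = real (Nbin0 J b a (b q)) / (real (Nzero J a) * real (Nbin J b (b q)))"

lemma wgt_nonneg: "0 \<le> wgt J b a q"
  unfolding wgt_def by simp

lemma cover_iff:
  assumes J: "finite J" and al: "alpha < 1"
  shows "ereal v \<le> pro_thr alpha J b a S \<longleftrightarrow>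
     (\<Sum>q\<in>{q\<in>J. a q}. if S q < v then wgt J b a q else 0) < 1 - alpha"
proof -
  let ?W = "(\<Sum>q\<in>{q\<in>J. a q}. if S q < v then wgt J b a q else 0)"
  have cdf: "pro_cdf J b a S t = (\<Sum>q\<in>{q\<in>J. a q}. if ereal (S q) \<le> t then wgt J b a q else 0)"
    if "t < ereal v" for t
    using that unfolding pro_cdf_def wgt_def by auto
  have "ereal v \<le> pro_thr alpha J b a S \<longleftrightarrow> (\<forall>t. 1 - alpha \<le> pro_cdf J b a S t \<longrightarrow> ereal v \<le> t)"
    unfolding pro_thr_def by (auto simp: le_Inf_iff)
  also have "\<dots> \<longleftrightarrow> \<not> (\<exists>t<ereal v. 1 - alpha \<le> pro_cdf J b a S t)"
    using not_le by blast
  also have "(\<exists>t<ereal v. 1 - alpha \<le> pro_cdf J b a S t) \<longleftrightarrow> 1 - alpha \<le> ?W"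
  proof
    assume "\<exists>t<ereal v. 1 - alpha \<le> pro_cdf J b a S t"
    then obtain t where t: "t < ereal v" "1 - alpha \<le> pro_cdf J b a S t" by blast
    have lt: "S q < v" if "ereal (S q) \<le> t" for q
      using le_less_trans[OF that t(1)] by simp
    have "pro_cdf J b a S t \<le> ?W"
      unfolding cdf[OF t(1)]
      by (rule sum_mono) (use lt in \<open>auto simp: wgt_nonneg\<close>)
    then show "1 - alpha \<le> ?W" using t by linarith
  next
    assume W: "1 - alpha \<le> ?W"
    define Q where "Q = {q\<in>J. a q \<and> S q < v}"
    have fQ: "finite Q" using J unfolding Q_def by auto
    show "\<exists>t<ereal v. 1 - alpha \<le> pro_cdf J b a S t"
    proof (cases "Q = {}")
      case True
      then have "?W = 0" unfolding Q_def by (intro sum.neutral) auto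
      then show ?thesis using W al by linarith
    next
      case False
      define m where "m = Max (S ` Q)"
      have m: "m \<in> S ` Q" unfolding m_def using fQ False by (intro Max_in) auto
      have mv: "m < v" using m unfolding Q_def by auto
      have le: "S q \<le> m" if "q \<in> Q" for q unfolding m_def using fQ that by auto
      have "?W \<le> (\<Sum>q\<in>{q\<in>J. a q}. if ereal (S q) \<le> ereal m then wgt J b a q else 0)"
        by (rule sum_mono) (use le in \<open>auto simp: wgt_nonneg Q_def\<close>)
      also have "\<dots> = pro_cdf J b a S (ereal m)" using cdf[of "ereal m"] mv by simp
      finally have "?W \<le> pro_cdf J b a S (ereal m)" .
      then show ?thesis using W mv by (intro exI[of _ "ereal m"]) auto
    qed
  qed
  finally show ?thesis by (simp add: not_le)
qed

lemma count_swap: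
  assumes J: "finite J"
  shows "(\<Sum>i\<in>{i\<in>J. \<not> a i}. (\<Sum>q\<in>{q\<in>J. b q = b i}. P q) / real (Nbin J b (b i)))
       = (\<Sum>q\<in>J. real (Nbin0 J b a (b q)) * P q / real (Nbin J b (b q)))"
proof -
  have "(\<Sum>i\<in>{i\<in>J. \<not> a i}. (\<Sum>q\<in>{q\<in>J. b q = b i}. P q) / real (Nbin J b (b i)))
      = (\<Sum>i\<in>{i\<in>J. \<not> a i}. \<Sum>q\<in>J. if b q = b i then P q / real (Nbin J b (b q)) else 0)"
    by (intro sum.cong refl) (simp add: sum_divide_distrib sum.inter_filter[OF J, symmetric] cong: if_cong)
  also have "\<dots> = (\<Sum>q\<in>J. \<Sum>i\<in>{i\<in>J. \<not> a i}. if b q = b i then P q / real (Nbin J b (b q)) else 0)"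
    by (rule sum.swap)
  also have "\<dots> = (\<Sum>q\<in>J. real (Nbin0 J b a (b q)) * P q / real (Nbin J b (b q)))"
  proof (intro sum.cong refl)
    fix q assume "q \<in> J"
    have "(\<Sum>i\<in>{i\<in>J. \<not> a i}. if b q = b i then P q / real (Nbin J b (b q)) else 0)
        = (\<Sum>i\<in>{i\<in>{i\<in>J. \<not> a i}. b q = b i}. P q / real (Nbin J b (b q)))"
      using J by (subst sum.inter_filter) auto
    also have "\<dots> = real (card {i\<in>{i\<in>J. \<not> a i}. b q = b i}) * (P q / real (Nbin J b (b q)))"
      by (rule sum_constant)
    also have "{i\<in>{i\<in>J. \<not> a i}. b q = b i} = {i \<in> J. b i = b q \<and> \<not> a i}" by auto
    finally show "(\<Sum>i\<in>{i\<in>J. \<not> a i}. if b q = b i then P q / real (Nbin J b (b q)) else 0)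
        = real (Nbin0 J b a (b q)) * P q / real (Nbin J b (b q))"
      unfolding Nbin0_def by simp
  qed
  finally show ?thesis .
qed

lemma Nbin_pos: "finite J \<Longrightarrow> i \<in> J \<Longrightarrow> 0 < Nbin J b (b i)"
  unfolding Nbin_def by (subst card_gt_0_iff) auto

lemma wsum1:
  assumes J: "finite J" and N: "0 < Nzero J a"
  shows "(\<Sum>q\<in>J. wgt J b a q) = 1"
proof -
  have "(\<Sum>i\<in>{i\<in>J. \<not> a i}. (\<Sum>q\<in>{q\<in>J. b q = b i}. 1::real) / real (Nbin J b (b i)))
     = (\<Sum>i\<in>{i\<in>J. \<not> a i}. 1)"
  proof (intro sum.cong refl)
    fix i assume i: "i \<in> {i\<in>J. \<not> a i}"
    have "(\<Sum>q\<in>{q\<in>J. b q = b i}. 1::real) = real (Nbin J b (b i))"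
      unfolding Nbin_def by simp
    then show "(\<Sum>q\<in>{q\<in>J. b q = b i}. 1::real) / real (Nbin J b (b i)) = 1"
      using Nbin_pos[OF J, of i b] i by simp
  qed
  also have "\<dots> = real (Nzero J a)" unfolding Nzero_def by simp
  finally have "(\<Sum>q\<in>J. real (Nbin0 J b a (b q)) * 1 / real (Nbin J b (b q))) = real (Nzero J a)"
    using count_swap[OF J, where a=a and b=b and P="\<lambda>_. 1"] by simp
  moreover have "(\<Sum>q\<in>J. real (Nbin0 J b a (b q)) / (real (Nzero J a) * real (Nbin J b (b q))))
     = (\<Sum>q\<in>J. real (Nbin0 J b a (b q)) / real (Nbin J b (b q))) / real (Nzero J a)"
    by (simp add: sum_divide_distrib mult.commute divide_divide_eq_left)
  ultimately show ?thesis
    unfolding wgt_def using N by simp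
qed

lemma quantile_mass:
  fixes w S :: "nat \<Rightarrow> real"
  assumes J: "finite J" and w: "\<And>q. q \<in> J \<Longrightarrow> 0 \<le> w q" and w1: "(\<Sum>q\<in>J. w q) = 1" and c: "c \<le> 1"
  shows "(\<Sum>q\<in>J. if c \<le> (\<Sum>q'\<in>J. if S q' < S q then w q' else 0) then w q else 0) \<le> 1 - c"
proof -
  define W where "W q = (\<Sum>q'\<in>J. if S q' < S q then w q' else 0)" for q
  define Bd where "Bd = {q\<in>J. c \<le> W q}"
  have fB: "finite Bd" using J unfolding Bd_def by auto
  have lhs: "(\<Sum>q\<in>J. if c \<le> W q then w q else 0) = (\<Sum>q\<in>Bd. w q)"
    unfolding Bd_def using J by (simp add: sum.inter_filter)
  show ?thesis unfolding W_def[symmetric] lhs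
  proof (cases "Bd = {}")
    case True then show "(\<Sum>q\<in>Bd. w q) \<le> 1 - c" using c by simp
  next
    case False
    have "Min (S ` Bd) \<in> S ` Bd" by (rule Min_in) (use fB False in auto)
    then obtain q0 where q0B: "q0 \<in> Bd" and q0m: "S q0 = Min (S ` Bd)" by auto
    have q0: "q0 \<in> Bd" "\<And>q. q \<in> Bd \<Longrightarrow> S q0 \<le> S q"
      using q0B q0m fB by auto
    have "(\<Sum>q\<in>Bd. w q) \<le> (\<Sum>q\<in>J. if S q0 \<le> S q then w q else 0)"
    proof -
      have "(\<Sum>q\<in>Bd. w q) = (\<Sum>q\<in>Bd. if S q0 \<le> S q then w q else 0)"
        using q0 by (intro sum.cong) auto
      also have "\<dots> \<le> (\<Sum>q\<in>J. if S q0 \<le> S q then w q else 0)"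
        by (rule sum_mono2[OF J]) (auto simp: Bd_def w)
      finally show ?thesis .
    qed
    also have "(\<Sum>q\<in>J. if S q0 \<le> S q then w q else 0) = 1 - W q0"
    proof -
      have "(\<Sum>q\<in>J. if S q0 \<le> S q then w q else 0) + W q0 = (\<Sum>q\<in>J. w q)"
        unfolding W_def sum.distrib[symmetric] by (intro sum.cong) auto
      then show ?thesis using w1 by simp
    qed
    also have "\<dots> \<le> 1 - c" using q0 unfolding Bd_def by auto
    finally show "(\<Sum>q\<in>Bd. w q) \<le> 1 - c" .
  qed
qed


definition wc :: "('x \<Rightarrow> real) \<Rightarrow> bool \<Rightarrow> 'x \<Rightarrow> real" where
  "wc p c x = (if c then p x else 1 - p x)"

locale mt5 =
  fixes M :: "'w measure" and MX :: "'x measure" and MY :: "'y measure"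
    and X :: "nat \<Rightarrow> 'w \<Rightarrow> 'x" and Y :: "nat \<Rightarrow> 'w \<Rightarrow> 'y" and A :: "nat \<Rightarrow> 'w \<Rightarrow> bool"
    and p :: "'x \<Rightarrow> real" and s :: "'x \<Rightarrow> 'y \<Rightarrow> real"
    and n :: nat and alpha eps :: real
  assumes P: "prob_space M"
    and alpha: "0 < alpha" "alpha < 1" and eps: "0 < eps"
    and p_meas: "p \<in> borel_measurable MX"
    and p_range: "\<And>x. 0 < p x \<and> p x < 1"
    and s_meas: "(\<lambda>(x, y). s x y) \<in> borel_measurable (MX \<Otimes>\<^sub>M MY)"
    and X_rv: "\<And>i. i < n \<Longrightarrow> X i \<in> measurable M MX"
    and Y_rv: "\<And>i. i < n \<Longrightarrow> Y i \<in> measurable M MY"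
    and A_rv: "\<And>i. i < n \<Longrightarrow> A i \<in> measurable M (count_space (UNIV :: bool set))"
    and iid_indep: "prob_space.indep_vars M (\<lambda>_. MX \<Otimes>\<^sub>M MY \<Otimes>\<^sub>M count_space (UNIV :: bool set))
                      (\<lambda>i \<omega>. (X i \<omega>, Y i \<omega>, A i \<omega>)) {..<n}"
    and iid_ident: "\<And>i j. i < n \<Longrightarrow> j < n \<Longrightarrow>
        distr M (MX \<Otimes>\<^sub>M MY \<Otimes>\<^sub>M count_space (UNIV :: bool set)) (\<lambda>\<omega>. (X i \<omega>, Y i \<omega>, A i \<omega>))
      = distr M (MX \<Otimes>\<^sub>M MY \<Otimes>\<^sub>M count_space (UNIV :: bool set)) (\<lambda>\<omega>. (X j \<omega>, Y j \<omega>, A j \<omega>))"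
    and mar: "\<And>i S. i < n \<Longrightarrow> S \<in> sets (MX \<Otimes>\<^sub>M MY) \<Longrightarrow>
        measure M {\<omega> \<in> space M. A i \<omega> \<and> (X i \<omega>, Y i \<omega>) \<in> S}
      = (\<integral>\<omega>. indicator S (X i \<omega>, Y i \<omega>) * p (X i \<omega>) \<partial>M)"
begin

interpretation prob_space M by (rule P)

abbreviation "MZ \<equiv> MX \<Otimes>\<^sub>M MY \<Otimes>\<^sub>M count_space (UNIV :: bool set)"

definition Z :: "nat \<Rightarrow> 'w \<Rightarrow> 'x \<times> 'y \<times> bool" where "Z q \<omega> = (X q \<omega>, Y q \<omega>, A q \<omega>)"
definition mu where "mu = distr M MZ (Z 0)"
definition nu where "nu = distr M (MX \<Otimes>\<^sub>M MY) (\<lambda>\<omega>. (X 0 \<omega>, Y 0 \<omega>))"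

lemma Z_meas: "q < n \<Longrightarrow> Z q \<in> measurable M MZ"
  unfolding Z_def using X_rv Y_rv A_rv by measurable

lemma p_meas'[measurable]: "p \<in> borel_measurable MX" by (rule p_meas)

lemma XY0_meas: "0 < n \<Longrightarrow> (\<lambda>\<omega>. (X 0 \<omega>, Y 0 \<omega>)) \<in> measurable M (MX \<Otimes>\<^sub>M MY)"
  using X_rv Y_rv by measurable

lemma wc_meas[measurable]: "wc p c \<in> borel_measurable MX"
  unfolding wc_def by (cases c) auto

lemma wc_range: "0 \<le> wc p c x" "wc p c x \<le> 1"
  unfolding wc_def using p_range[of x] by auto

lemma mar_emeasure:
  assumes n: "0 < n" and S: "S \<in> sets (MX \<Otimes>\<^sub>M MY)"
  shows "emeasure M {\<omega> \<in> space M. A 0 \<omega> = c \<and> (X 0 \<omega>, Y 0 \<omega>) \<in> S}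
     = (\<integral>\<^sup>+ \<omega>. ennreal (wc p c (X 0 \<omega>)) * indicator S (X 0 \<omega>, Y 0 \<omega>) \<partial>M)"
proof -
  note XY = XY0_meas[OF n]
  note X0 = X_rv[OF n] and A0 = A_rv[OF n]
  have Sm: "(\<lambda>\<omega>. indicator S (X 0 \<omega>, Y 0 \<omega>) :: real) \<in> borel_measurable M"
    using XY S by measurable
  have int: "integrable M (\<lambda>\<omega>. wc p c (X 0 \<omega>) * indicator S (X 0 \<omega>, Y 0 \<omega>))"
    by (rule integrable_const_bound[where B=1])
       (use X0 Sm wc_range in \<open>auto simp: indicator_def\<close>)
  have rhs: "(\<integral>\<^sup>+ \<omega>. ennreal (wc p c (X 0 \<omega>)) * indicator S (X 0 \<omega>, Y 0 \<omega>) \<partial>M)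
      = ennreal (\<integral>\<omega>. wc p c (X 0 \<omega>) * indicator S (X 0 \<omega>, Y 0 \<omega>) \<partial>M)"
    by (subst nn_integral_eq_integral[OF int, symmetric])
       (auto simp: wc_range indicator_def intro!: nn_integral_cong)
  have ev: "{\<omega> \<in> space M. A 0 \<omega> = c' \<and> (X 0 \<omega>, Y 0 \<omega>) \<in> S} \<in> events" for c'
    using A0 XY S by measurable
  have ind: "measure M {\<omega> \<in> space M. (X 0 \<omega>, Y 0 \<omega>) \<in> S} = (\<integral>\<omega>. indicator S (X 0 \<omega>, Y 0 \<omega>) \<partial>M)"
  proof -
    have "(\<integral>\<omega>. indicator S (X 0 \<omega>, Y 0 \<omega>) \<partial>M) = (\<integral>\<omega>. indicator {\<omega> \<in> space M. (X 0 \<omega>, Y 0 \<omega>) \<in> S} \<omega> \<partial>M)"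
      by (intro Bochner_Integration.integral_cong) (auto simp: indicator_def)
    also have "\<dots> = measure M {\<omega> \<in> space M. (X 0 \<omega>, Y 0 \<omega>) \<in> S}"
      by (simp add: Int_absorb2)
    finally show ?thesis by simp
  qed
  have intS: "integrable M (\<lambda>\<omega>. indicator S (X 0 \<omega>, Y 0 \<omega>) :: real)"
    by (rule integrable_const_bound[where B=1]) (use Sm in \<open>auto simp: indicator_def\<close>)
  have intP: "integrable M (\<lambda>\<omega>. indicator S (X 0 \<omega>, Y 0 \<omega>) * p (X 0 \<omega>))"
    by (rule integrable_const_bound[where B=1])
       (use Sm X0 p_range in \<open>auto simp: indicator_def less_imp_le\<close>)
  have meq: "measure M {\<omega> \<in> space M. A 0 \<omega> = c \<and> (X 0 \<omega>, Y 0 \<omega>) \<in> S}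
      = (\<integral>\<omega>. wc p c (X 0 \<omega>) * indicator S (X 0 \<omega>, Y 0 \<omega>) \<partial>M)"
  proof (cases c)
    case True
    then show ?thesis using mar[OF n S] by (simp add: wc_def mult.commute)
  next
    case False
    have "{\<omega> \<in> space M. A 0 \<omega> = c \<and> (X 0 \<omega>, Y 0 \<omega>) \<in> S}
      = {\<omega> \<in> space M. (X 0 \<omega>, Y 0 \<omega>) \<in> S} - {\<omega> \<in> space M. A 0 \<omega> \<and> (X 0 \<omega>, Y 0 \<omega>) \<in> S}"
      using False by auto
    then have "measure M {\<omega> \<in> space M. A 0 \<omega> = c \<and> (X 0 \<omega>, Y 0 \<omega>) \<in> S}
      = measure M {\<omega> \<in> space M. (X 0 \<omega>, Y 0 \<omega>) \<in> S} - measure M {\<omega> \<in> space M. A 0 \<omega> \<and> (X 0 \<omega>, Y 0 \<omega>) \<in> S}"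
      using ev[of True] XY S by (simp add: finite_measure_Diff) (subst finite_measure_Diff; auto)
    also have "\<dots> = (\<integral>\<omega>. indicator S (X 0 \<omega>, Y 0 \<omega>) \<partial>M) - (\<integral>\<omega>. indicator S (X 0 \<omega>, Y 0 \<omega>) * p (X 0 \<omega>) \<partial>M)"
      using ind mar[OF n S] by simp
    also have "\<dots> = (\<integral>\<omega>. wc p c (X 0 \<omega>) * indicator S (X 0 \<omega>, Y 0 \<omega>) \<partial>M)"
      using False by (subst Bochner_Integration.integral_diff[OF intS intP, symmetric]) (auto simp: wc_def algebra_simps intro!: Bochner_Integration.integral_cong)
    finally show ?thesis .
  qed
  show ?thesis using meq rhs by (simp add: emeasure_eq_measure)
qed

lemma mu_split:
  assumes n: "0 < n" and g[measurable]: "g \<in> borel_measurable (MX \<Otimes>\<^sub>M MY)"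
  shows "(\<integral>\<^sup>+ z. g (fst z, fst (snd z)) * indicator {z. snd (snd z) = c} z \<partial>mu)
       = (\<integral>\<^sup>+ v. g v * ennreal (wc p c (fst v)) \<partial>nu)"
proof -
  note XY[measurable] = XY0_meas[OF n]
  note X0[measurable] = X_rv[OF n] and A0[measurable] = A_rv[OF n]
  note Z0[measurable] = Z_meas[OF n]
  define f1 where "f1 \<omega> = (indicator {\<omega>. A 0 \<omega> = c} \<omega> :: ennreal)" for \<omega>
  define f2 where "f2 \<omega> = ennreal (wc p c (X 0 \<omega>))" for \<omega>
  have f1m[measurable]: "f1 \<in> borel_measurable M"
  proof -
    have "f1 = (\<lambda>\<omega>. if A 0 \<omega> = c then 1 else 0)" unfolding f1_def by (auto simp: fun_eq_iff)
    then show ?thesis by simp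
  qed
  have f2m[measurable]: "f2 \<in> borel_measurable M" unfolding f2_def by measurable
  define N1 where "N1 = distr (density M f1) (MX \<Otimes>\<^sub>M MY) (\<lambda>\<omega>. (X 0 \<omega>, Y 0 \<omega>))"
  define N2 where "N2 = distr (density M f2) (MX \<Otimes>\<^sub>M MY) (\<lambda>\<omega>. (X 0 \<omega>, Y 0 \<omega>))"
  have XY1: "(\<lambda>\<omega>. (X 0 \<omega>, Y 0 \<omega>)) \<in> measurable (density M f1) (MX \<Otimes>\<^sub>M MY)"
    by (simp add: measurable_cong_sets[OF sets_density refl])
  have XY2: "(\<lambda>\<omega>. (X 0 \<omega>, Y 0 \<omega>)) \<in> measurable (density M f2) (MX \<Otimes>\<^sub>M MY)"
    by (simp add: measurable_cong_sets[OF sets_density refl])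
  have N12: "N1 = N2"
  proof (rule measure_eqI)
    show "sets N1 = sets N2" unfolding N1_def N2_def by simp
    fix S assume "S \<in> sets N1"
    then have S[measurable]: "S \<in> sets (MX \<Otimes>\<^sub>M MY)" unfolding N1_def by simp
    have "emeasure N1 S = (\<integral>\<^sup>+ \<omega>. f1 \<omega> * indicator ((\<lambda>\<omega>. (X 0 \<omega>, Y 0 \<omega>)) -` S \<inter> space M) \<omega> \<partial>M)"
      unfolding N1_def by (simp add: emeasure_distr[OF XY1] emeasure_density)
    also have "\<dots> = (\<integral>\<^sup>+ \<omega>. indicator {\<omega> \<in> space M. A 0 \<omega> = c \<and> (X 0 \<omega>, Y 0 \<omega>) \<in> S} \<omega> \<partial>M)"
      by (intro nn_integral_cong) (auto simp: f1_def indicator_def)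
    also have "\<dots> = emeasure M {\<omega> \<in> space M. A 0 \<omega> = c \<and> (X 0 \<omega>, Y 0 \<omega>) \<in> S}"
      by (intro nn_integral_indicator) measurable
    also have "\<dots> = (\<integral>\<^sup>+ \<omega>. ennreal (wc p c (X 0 \<omega>)) * indicator S (X 0 \<omega>, Y 0 \<omega>) \<partial>M)"
      by (rule mar_emeasure[OF n S])
    also have "\<dots> = (\<integral>\<^sup>+ \<omega>. f2 \<omega> * indicator ((\<lambda>\<omega>. (X 0 \<omega>, Y 0 \<omega>)) -` S \<inter> space M) \<omega> \<partial>M)"
      by (intro nn_integral_cong) (auto simp: f2_def indicator_def)
    also have "\<dots> = emeasure N2 S"
      unfolding N2_def by (simp add: emeasure_distr[OF XY2] emeasure_density)
    finally show "emeasure N1 S = emeasure N2 S" .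
  qed
  have "(\<integral>\<^sup>+ z. g (fst z, fst (snd z)) * indicator {z. snd (snd z) = c} z \<partial>mu)
      = (\<integral>\<^sup>+ \<omega>. g (X 0 \<omega>, Y 0 \<omega>) * indicator {z. snd (snd z) = c} (Z 0 \<omega>) \<partial>M)"
    unfolding mu_def
  proof (subst nn_integral_distr[OF Z0])
    have "(\<lambda>z. indicator {z. snd (snd z) = c} z :: ennreal) = (\<lambda>z. if snd (snd z) = c then 1 else 0)"
      by (auto simp: fun_eq_iff)
    then show "(\<lambda>z. g (fst z, fst (snd z)) * indicator {z. snd (snd z) = c} z) \<in> borel_measurable (distr M MZ (Z 0))"
      by simp
  qed (simp add: Z_def)
  also have "\<dots> = (\<integral>\<^sup>+ \<omega>. f1 \<omega> * g (X 0 \<omega>, Y 0 \<omega>) \<partial>M)"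
    by (intro nn_integral_cong) (auto simp: f1_def Z_def indicator_def)
  also have "\<dots> = integral\<^sup>N N1 g"
    unfolding N1_def by (simp add: nn_integral_distr[OF XY1] nn_integral_density)
  also have "\<dots> = integral\<^sup>N N2 g" by (simp add: N12)
  also have "\<dots> = (\<integral>\<^sup>+ \<omega>. f2 \<omega> * g (X 0 \<omega>, Y 0 \<omega>) \<partial>M)"
    unfolding N2_def by (simp add: nn_integral_distr[OF XY2] nn_integral_density)
  also have "\<dots> = (\<integral>\<^sup>+ v. g v * ennreal (wc p c (fst v)) \<partial>nu)"
    unfolding nu_def by (subst nn_integral_distr[OF XY]) (auto simp: f2_def mult.commute)
  finally show ?thesis .
qed

lemma sets_nu[measurable_cong]: "sets nu = sets (MX \<Otimes>\<^sub>M MY)" unfolding nu_def by simp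
lemma sets_mu[measurable_cong]: "sets mu = sets MZ" unfolding mu_def by simp

lemma bin_meas[measurable]: "(\<lambda>x. bin_of eps (p x)) \<in> measurable MX (count_space UNIV)"
  by (rule bin_of_measurable[OF eps p_meas p_range])

lemma nu_prob: "0 < n \<Longrightarrow> prob_space nu"
  unfolding nu_def by (rule prob_space_distr[OF XY0_meas])

lemma mu_prob: "0 < n \<Longrightarrow> prob_space mu"
  unfolding mu_def by (rule prob_space_distr[OF Z_meas])

definition binv :: "int \<Rightarrow> 'x \<times> 'y \<Rightarrow> ennreal" where
  "binv k v = (if bin_of eps (p (fst v)) = k then 1 else 0)"

definition indk :: "int \<Rightarrow> bool \<Rightarrow> 'x \<times> 'y \<times> bool \<Rightarrow> ennreal" where
  "indk k c z = (if bin_of eps (p (fst z)) = k \<and> snd (snd z) = c then 1 else 0)"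

lemma binv_meas[measurable]: "binv k \<in> borel_measurable (MX \<Otimes>\<^sub>M MY)"
  unfolding binv_def by measurable

lemma indk_meas[measurable]: "indk k c \<in> borel_measurable MZ"
  unfolding indk_def by measurable

lemma two_point_eq:
  assumes n: "0 < n" and G[measurable]: "case_prod G \<in> borel_measurable ((MX \<Otimes>\<^sub>M MY) \<Otimes>\<^sub>M (MX \<Otimes>\<^sub>M MY))"
  shows "(\<integral>\<^sup>+ y'. \<integral>\<^sup>+ y. indk k False y * indk k c y' * G (fst y, fst (snd y)) (fst y', fst (snd y')) \<partial>mu \<partial>mu)
     = (\<integral>\<^sup>+ v'. \<integral>\<^sup>+ v. binv k v * binv k v' * ennreal (wc p False (fst v)) * ennreal (wc p c (fst v')) * G v v' \<partial>nu \<partial>nu)"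
proof -
  have inner: "(\<integral>\<^sup>+ y. indk k False y * indk k c y' * G (fst y, fst (snd y)) (fst y', fst (snd y')) \<partial>mu)
     = (\<integral>\<^sup>+ v. (binv k v * indk k c y' * G v (fst y', fst (snd y'))) * ennreal (wc p False (fst v)) \<partial>nu)"
    if y': "y' \<in> space mu" for y'
  proof -
    have y'': "(fst y', fst (snd y')) \<in> space (MX \<Otimes>\<^sub>M MY)"
      using y' by (auto simp: space_pair_measure mu_def)
    have gm: "(\<lambda>v. binv k v * indk k c y' * G v (fst y', fst (snd y'))) \<in> borel_measurable (MX \<Otimes>\<^sub>M MY)"
      using y'' by measurable
    show ?thesis
      unfolding mu_split[OF n gm, symmetric]
      by (intro nn_integral_cong) (auto simp: indk_def binv_def indicator_def)
  qed
  have "(\<integral>\<^sup>+ y'. \<integral>\<^sup>+ y. indk k False y * indk k c y' * G (fst y, fst (snd y)) (fst y', fst (snd y')) \<partial>mu \<partial>mu)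
      = (\<integral>\<^sup>+ y'. (binv k (fst y', fst (snd y')) * (\<integral>\<^sup>+ v. binv k v * G v (fst y', fst (snd y')) * ennreal (wc p False (fst v)) \<partial>nu)) * indicator {z. snd (snd z) = c} y' \<partial>mu)"
  proof (intro nn_integral_cong)
    fix y' assume y': "y' \<in> space mu"
    have y'': "(fst y', fst (snd y')) \<in> space (MX \<Otimes>\<^sub>M MY)"
      using y' by (auto simp: space_pair_measure mu_def)
    have "(\<integral>\<^sup>+ v. (binv k v * indk k c y' * G v (fst y', fst (snd y'))) * ennreal (wc p False (fst v)) \<partial>nu)
        = (\<integral>\<^sup>+ v. indk k c y' * (binv k v * G v (fst y', fst (snd y')) * ennreal (wc p False (fst v))) \<partial>nu)"
      by (intro nn_integral_cong) (simp add: ac_simps)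
    also have "\<dots> = indk k c y' * (\<integral>\<^sup>+ v. binv k v * G v (fst y', fst (snd y')) * ennreal (wc p False (fst v)) \<partial>nu)"
      using y'' by (intro nn_integral_cmult) measurable
    finally show "(\<integral>\<^sup>+ y. indk k False y * indk k c y' * G (fst y, fst (snd y)) (fst y', fst (snd y')) \<partial>mu)
      = (binv k (fst y', fst (snd y')) * (\<integral>\<^sup>+ v. binv k v * G v (fst y', fst (snd y')) * ennreal (wc p False (fst v)) \<partial>nu)) * indicator {z. snd (snd z) = c} y'"
      unfolding inner[OF y'] by (auto simp: indk_def binv_def indicator_def)
  qed
  also have "\<dots> = (\<integral>\<^sup>+ v'. (binv k v' * (\<integral>\<^sup>+ v. binv k v * G v v' * ennreal (wc p False (fst v)) \<partial>nu)) * ennreal (wc p c (fst v')) \<partial>nu)"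
  proof (rule mu_split[OF n])
    interpret nu: prob_space nu by (rule nu_prob[OF n])
    show "(\<lambda>v'. binv k v' * (\<integral>\<^sup>+ v. binv k v * G v v' * ennreal (wc p False (fst v)) \<partial>nu)) \<in> borel_measurable (MX \<Otimes>\<^sub>M MY)"
      by measurable
  qed
  also have "\<dots> = (\<integral>\<^sup>+ v'. \<integral>\<^sup>+ v. binv k v * binv k v' * ennreal (wc p False (fst v)) * ennreal (wc p c (fst v')) * G v v' \<partial>nu \<partial>nu)"
  proof (intro nn_integral_cong)
    fix v' assume v': "v' \<in> space nu"
    then have v'': "v' \<in> space (MX \<Otimes>\<^sub>M MY)" by (simp add: nu_def)
    have "(binv k v' * (\<integral>\<^sup>+ v. binv k v * G v v' * ennreal (wc p False (fst v)) \<partial>nu)) * ennreal (wc p c (fst v'))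
      = (\<integral>\<^sup>+ v. (binv k v' * ennreal (wc p c (fst v'))) * (binv k v * G v v' * ennreal (wc p False (fst v))) \<partial>nu)"
      using v'' by (subst nn_integral_cmult) (measurable, simp add: ac_simps)
    also have "\<dots> = (\<integral>\<^sup>+ v. binv k v * binv k v' * ennreal (wc p False (fst v)) * ennreal (wc p c (fst v')) * G v v' \<partial>nu)"
      by (intro nn_integral_cong) (simp add: ac_simps)
    finally show "(binv k v' * (\<integral>\<^sup>+ v. binv k v * G v v' * ennreal (wc p False (fst v)) \<partial>nu)) * ennreal (wc p c (fst v'))
      = (\<integral>\<^sup>+ v. binv k v * binv k v' * ennreal (wc p False (fst v)) * ennreal (wc p c (fst v')) * G v v' \<partial>nu)" .
  qed
  finally show ?thesis .
qed

lemma weight_ratio: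
  assumes "bin_of eps (p x) = k" "bin_of eps (p x') = k"
  shows "wc p False x * wc p c x' \<le> (1 + eps) * (wc p False x' * wc p c x)"
proof (cases c)
  case True
  then show ?thesis using bin_ratio[OF eps _ _ _ _ assms] p_range[of x] p_range[of x']
    by (simp add: wc_def)
next
  case False
  define t where "t = (1 - p x) * (1 - p x')"
  have t: "0 \<le> t" unfolding t_def using p_range[of x] p_range[of x'] by simp
  have "t \<le> (1 + eps) * t" using t eps by (simp add: algebra_simps)
  then show ?thesis using False by (simp add: wc_def t_def mult.commute)
qed

lemma two_point:
  assumes n: "0 < n" and h[measurable]: "case_prod h \<in> borel_measurable ((MX \<Otimes>\<^sub>M MY) \<Otimes>\<^sub>M (MX \<Otimes>\<^sub>M MY))"
  shows "(\<integral>\<^sup>+ y'. \<integral>\<^sup>+ y. indk k False y * indk k c y' * h (fst y, fst (snd y)) (fst y', fst (snd y')) \<partial>mu \<partial>mu)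
     \<le> ennreal (1 + eps) * (\<integral>\<^sup>+ y'. \<integral>\<^sup>+ y. indk k False y * indk k c y' * h (fst y', fst (snd y')) (fst y, fst (snd y)) \<partial>mu \<partial>mu)"
proof -
  interpret nu: prob_space nu by (rule nu_prob[OF n])
  interpret nn: pair_sigma_finite nu nu ..
  have hs[measurable]: "case_prod (\<lambda>v v'. h v' v) \<in> borel_measurable ((MX \<Otimes>\<^sub>M MY) \<Otimes>\<^sub>M (MX \<Otimes>\<^sub>M MY))"
    by measurable
  define Q where "Q v v' = binv k v * binv k v' * ennreal (wc p False (fst v)) * ennreal (wc p c (fst v'))" for v v'
  have Qm[measurable]: "case_prod Q \<in> borel_measurable ((MX \<Otimes>\<^sub>M MY) \<Otimes>\<^sub>M (MX \<Otimes>\<^sub>M MY))"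
    unfolding Q_def by measurable
  have L: "(\<integral>\<^sup>+ y'. \<integral>\<^sup>+ y. indk k False y * indk k c y' * h (fst y, fst (snd y)) (fst y', fst (snd y')) \<partial>mu \<partial>mu)
     = (\<integral>\<^sup>+ v'. \<integral>\<^sup>+ v. Q v v' * h v v' \<partial>nu \<partial>nu)"
    unfolding two_point_eq[OF n h] Q_def ..
  have "(\<integral>\<^sup>+ y'. \<integral>\<^sup>+ y. indk k False y * indk k c y' * h (fst y', fst (snd y')) (fst y, fst (snd y)) \<partial>mu \<partial>mu)
     = (\<integral>\<^sup>+ v'. \<integral>\<^sup>+ v. Q v v' * h v' v \<partial>nu \<partial>nu)"
    unfolding two_point_eq[OF n hs] Q_def ..
  also have "\<dots> = (\<integral>\<^sup>+ v. \<integral>\<^sup>+ v'. Q v v' * h v' v \<partial>nu \<partial>nu)"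
    by (rule nn.Fubini') measurable
  finally have R: "(\<integral>\<^sup>+ y'. \<integral>\<^sup>+ y. indk k False y * indk k c y' * h (fst y', fst (snd y')) (fst y, fst (snd y)) \<partial>mu \<partial>mu)
     = (\<integral>\<^sup>+ v'. \<integral>\<^sup>+ v. Q v' v * h v v' \<partial>nu \<partial>nu)" .
  have pt: "Q v v' \<le> ennreal (1 + eps) * Q v' v" for v v'
  proof (cases "bin_of eps (p (fst v)) = k \<and> bin_of eps (p (fst v')) = k")
    case True
    have r: "wc p False (fst v) * wc p c (fst v') \<le> (1 + eps) * (wc p False (fst v') * wc p c (fst v))"
      using weight_ratio True by blast
    have e: "ennreal (wc p False (fst v)) * ennreal (wc p c (fst v')) \<le> ennreal (1 + eps) * (ennreal (wc p False (fst v')) * ennreal (wc p c (fst v)))"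
    proof -
      have "ennreal (wc p False (fst v)) * ennreal (wc p c (fst v')) = ennreal (wc p False (fst v) * wc p c (fst v'))"
        by (rule ennreal_mult[symmetric]) (rule wc_range)+
      also have "\<dots> \<le> ennreal ((1 + eps) * (wc p False (fst v') * wc p c (fst v)))"
        using r by (rule ennreal_leI)
      also have "\<dots> = ennreal (1 + eps) * ennreal (wc p False (fst v') * wc p c (fst v))"
        by (rule ennreal_mult) (use eps wc_range in \<open>auto intro: mult_nonneg_nonneg\<close>)
      also have "ennreal (wc p False (fst v') * wc p c (fst v)) = ennreal (wc p False (fst v')) * ennreal (wc p c (fst v))"
        by (rule ennreal_mult) (rule wc_range)+
      finally show ?thesis .
    qed
    show ?thesis using True e by (simp add: Q_def binv_def mult.assoc)
  next
    case False
    then show ?thesis by (auto simp: Q_def binv_def)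
  qed
  have "(\<integral>\<^sup>+ v'. \<integral>\<^sup>+ v. Q v v' * h v v' \<partial>nu \<partial>nu) \<le> (\<integral>\<^sup>+ v'. \<integral>\<^sup>+ v. ennreal (1 + eps) * (Q v' v * h v v') \<partial>nu \<partial>nu)"
    by (intro nn_integral_mono) (use pt in \<open>simp add: mult.assoc[symmetric] mult_right_mono\<close>)
  also have "\<dots> = (\<integral>\<^sup>+ v'. ennreal (1 + eps) * \<integral>\<^sup>+ v. Q v' v * h v v' \<partial>nu \<partial>nu)"
  proof (intro nn_integral_cong nn_integral_cmult)
    fix v' assume "v' \<in> space nu"
    then have v'': "v' \<in> space (MX \<Otimes>\<^sub>M MY)" by (simp add: nu_def)
    show "(\<lambda>v. Q v' v * h v v') \<in> borel_measurable nu" using v'' by measurable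
  qed
  also have "\<dots> = ennreal (1 + eps) * (\<integral>\<^sup>+ v'. \<integral>\<^sup>+ v. Q v' v * h v v' \<partial>nu \<partial>nu)"
    by (intro nn_integral_cmult) measurable
  finally show ?thesis unfolding L R .
qed

end


context mt5 begin

definition "PP = PiM {..<n} (\<lambda>_. mu)"

definition sc :: "(nat \<Rightarrow> 'x \<times> 'y \<times> bool) \<Rightarrow> nat \<Rightarrow> real" where
  "sc d q = s (fst (d q)) (fst (snd (d q)))"

definition cnd :: "(nat \<Rightarrow> int) \<Rightarrow> (nat \<Rightarrow> bool) \<Rightarrow> nat \<Rightarrow> 'x \<times> 'y \<times> bool \<Rightarrow> bool" where
  "cnd b a q z = (bin_of eps (p (fst z)) = b q \<and> snd (snd z) = a q)"

definition Evd :: "(nat \<Rightarrow> int) \<Rightarrow> (nat \<Rightarrow> bool) \<Rightarrow> (nat \<Rightarrow> 'x \<times> 'y \<times> bool) \<Rightarrow> bool" where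
  "Evd b a d = (\<forall>q\<in>{..<n}. cnd b a q (d q))"

definition badd where
  "badd J b a d i = (1 - alpha \<le> (\<Sum>q\<in>J. if sc d q < sc d i then wgt J b a q else 0))"

definition covd where
  "covd J b a d i = ((\<Sum>q\<in>{q\<in>J. a q}. if sc d q < sc d i then wgt J b a q else 0) < 1 - alpha)"

lemma s_meas'[measurable]: "(\<lambda>(x, y). s x y) \<in> borel_measurable (MX \<Otimes>\<^sub>M MY)" by (rule s_meas)

lemma comp_const:
  assumes "q \<notin> I" "d \<in> space (PiM I N)"
  shows "d q = undefined"
  using assms by (auto simp: space_PiM PiE_def extensional_def)

lemma comp_meas_gen:
  assumes sN: "sets N = sets MZ" and f: "f \<in> measurable MZ K" and K: "space K = UNIV"
  shows "(\<lambda>d. f (d q)) \<in> measurable (PiM I (\<lambda>_. N)) K"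
proof (cases "q \<in> I")
  case True
  have "(\<lambda>d. d q) \<in> measurable (PiM I (\<lambda>_. N)) N" using True by measurable
  then have "(\<lambda>d. d q) \<in> measurable (PiM I (\<lambda>_. N)) MZ" using measurable_cong_sets[OF refl sN, of "PiM I (\<lambda>_. N)"] by simp
  from measurable_compose[OF this f] show ?thesis .
next
  case False
  have "(\<lambda>d. f (d q)) \<in> measurable (PiM I (\<lambda>_. N)) K \<longleftrightarrow> (\<lambda>d. f undefined) \<in> measurable (PiM I (\<lambda>_. N)) K"
    by (rule measurable_cong) (simp add: comp_const[OF False])
  then show ?thesis using K by simp
qed

lemma sc_meas[measurable]: "(\<lambda>d. sc d q) \<in> borel_measurable (PiM I (\<lambda>_. mu))"
  unfolding sc_def by (rule comp_meas_gen[OF sets_mu]) auto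

lemma cnd_meas[measurable]: "(\<lambda>d. cnd b a q (d r)) \<in> measurable (PiM I (\<lambda>_. mu)) (count_space UNIV)"
  unfolding cnd_def by (rule comp_meas_gen[OF sets_mu]) auto

lemma sc_measZ[measurable]: "(\<lambda>d. sc d q) \<in> borel_measurable (PiM I (\<lambda>_. MZ))"
  unfolding sc_def by (rule comp_meas_gen[OF refl]) auto

lemma cnd_measZ[measurable]: "(\<lambda>d. cnd b a q (d r)) \<in> measurable (PiM I (\<lambda>_. MZ)) (count_space UNIV)"
  unfolding cnd_def by (rule comp_meas_gen[OF refl]) auto

lemma Evd_meas[measurable]: "Measurable.pred (PiM I (\<lambda>_. mu)) (Evd b a)"
  unfolding Evd_def by measurable

lemma badd_meas[measurable]: "Measurable.pred (PiM I (\<lambda>_. mu)) (\<lambda>d. badd J b a d i)"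
  unfolding badd_def by measurable

lemma covd_meas[measurable]: "Measurable.pred (PiM I (\<lambda>_. mu)) (\<lambda>d. covd J b a d i)"
  unfolding covd_def by measurable

lemma Evd_measZ[measurable]: "Measurable.pred (PiM I (\<lambda>_. MZ)) (Evd b a)"
  unfolding Evd_def by measurable

lemma covd_measZ[measurable]: "Measurable.pred (PiM I (\<lambda>_. MZ)) (\<lambda>d. covd J b a d i)"
  unfolding covd_def by measurable

end


context mt5 begin

definition Sx :: "nat \<Rightarrow> nat \<Rightarrow> (nat \<Rightarrow> 'x \<times> 'y \<times> bool) \<Rightarrow> 'x \<times> 'y \<Rightarrow> 'x \<times> 'y \<Rightarrow> nat \<Rightarrow> real" where
  "Sx i j x' v v' q = (if q = i then s (fst v) (snd v) else if q = j then s (fst v') (snd v') else sc x' q)"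

definition hh where
  "hh J b a i j x' v v' = (if 1 - alpha \<le> (\<Sum>q\<in>J. if Sx i j x' v v' q < Sx i j x' v v' i then wgt J b a q else 0)
      then 1 else (0::ennreal))"

lemma Sx_meas[measurable]:
  "(\<lambda>(v, v'). Sx i j x' v v' q) \<in> borel_measurable ((MX \<Otimes>\<^sub>M MY) \<Otimes>\<^sub>M (MX \<Otimes>\<^sub>M MY))"
proof -
  have s2: "(\<lambda>v. s (fst v) (snd v)) \<in> borel_measurable (MX \<Otimes>\<^sub>M MY)"
    using s_meas by (simp add: case_prod_beta')
  show ?thesis unfolding Sx_def using s2 by measurable
qed

lemma hh_meas[measurable]:
  "case_prod (hh J b a i j x') \<in> borel_measurable ((MX \<Otimes>\<^sub>M MY) \<Otimes>\<^sub>M (MX \<Otimes>\<^sub>M MY))"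
proof -
  have "case_prod (hh J b a i j x') = (\<lambda>w. if 1 - alpha \<le> (\<Sum>q\<in>J. if (\<lambda>(v, v'). Sx i j x' v v' q) w < (\<lambda>(v, v'). Sx i j x' v v' i) w then wgt J b a q else 0) then 1 else (0::ennreal))"
    by (auto simp: hh_def fun_eq_iff)
  also have "\<dots> \<in> borel_measurable ((MX \<Otimes>\<^sub>M MY) \<Otimes>\<^sub>M (MX \<Otimes>\<^sub>M MY))"
    by measurable
  finally show ?thesis .
qed

lemma sc_upd:
  assumes "i \<noteq> j"
  shows "sc (x'(j := y', i := y)) q = Sx i j x' (fst y, fst (snd y)) (fst y', fst (snd y')) q"
  using assms unfolding Sx_def sc_def by auto

lemma badd_upd_i:
  assumes "i \<noteq> j"
  shows "(if badd J b a (x'(j := y', i := y)) i then 1 else (0::ennreal))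
     = hh J b a i j x' (fst y, fst (snd y)) (fst y', fst (snd y'))"
  unfolding badd_def hh_def sc_upd[OF assms] ..

lemma badd_upd_j:
  assumes ij: "i \<noteq> j" and J: "i \<in> J" "j \<in> J" and bij: "b i = b j"
  shows "(if badd J b a (x'(j := y', i := y)) j then 1 else (0::ennreal))
     = hh J b a i j x' (fst y', fst (snd y')) (fst y, fst (snd y))"
proof -
  define v where "v = (fst y, fst (snd y))"
  define v' where "v' = (fst y', fst (snd y'))"
  define sw where "sw q = (if q = i then j else if q = j then i else q)" for q
  have bij_sw: "bij_betw sw J J"
    by (rule bij_betwI[where g=sw]) (use J in \<open>auto simp: sw_def\<close>)
  have Ssw: "Sx i j x' v v' (sw q) = Sx i j x' v' v q" for q
    using ij unfolding Sx_def sw_def by auto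
  have wsw: "wgt J b a (sw q) = wgt J b a q" for q
    unfolding wgt_def sw_def using bij by auto
  have "(\<Sum>q\<in>J. if Sx i j x' v v' q < Sx i j x' v v' j then wgt J b a q else 0)
      = (\<Sum>q\<in>J. if Sx i j x' v v' (sw q) < Sx i j x' v v' j then wgt J b a (sw q) else 0)"
    by (rule sum.reindex_bij_betw[OF bij_sw, symmetric])
  also have "\<dots> = (\<Sum>q\<in>J. if Sx i j x' v' v q < Sx i j x' v' v i then wgt J b a q else 0)"
    using ij by (intro sum.cong refl) (simp add: Ssw wsw, simp add: Sx_def)
  finally show ?thesis
    unfolding badd_def hh_def sc_upd[OF ij] v_def[symmetric] v'_def[symmetric] by simp
qed

lemma Evd_upd:
  assumes U: "{..<n} = insert i (insert j R)" and ij: "i \<noteq> j" "i \<notin> R" "j \<notin> R"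
  shows "Evd b a (x'(j := y', i := y)) \<longleftrightarrow> (\<forall>q\<in>R. cnd b a q (x' q)) \<and> cnd b a i y \<and> cnd b a j y'"
  unfolding Evd_def U using ij by auto

lemma swap:
  assumes ij: "i < n" "j < n" "i \<noteq> j" and J: "i \<in> J" "j \<in> J" and bij: "b i = b j" and ai: "\<not> a i"
  shows "emeasure PP {d \<in> space PP. Evd b a d \<and> badd J b a d i}
    \<le> ennreal (1 + eps) * emeasure PP {d \<in> space PP. Evd b a d \<and> badd J b a d j}"
proof -
  have n: "0 < n" using ij by simp
  interpret mu: prob_space mu by (rule mu_prob[OF n])
  interpret PS: product_sigma_finite "\<lambda>_::nat. mu"
    by unfold_locales
  define R where "R = {..<n} - {i, j}"
  have fin: "finite R" "finite (insert j R)" "i \<notin> insert j R" "j \<notin> R" "i \<notin> R"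
    using ij unfolding R_def by auto
  have U: "{..<n} = insert i (insert j R)" using ij unfolding R_def by auto
  define F where "F c d = (if Evd b a d \<and> badd J b a d c then 1 else (0::ennreal))" for c d
  have Fm[measurable]: "F c \<in> borel_measurable (PiM I (\<lambda>_. mu))" for c I
    unfolding F_def by measurable
  have em: "emeasure PP {d \<in> space PP. Evd b a d \<and> badd J b a d c}
     = (\<integral>\<^sup>+ d. F c d \<partial>PiM (insert i (insert j R)) (\<lambda>_. mu))" for c
  proof -
    have "emeasure PP {d \<in> space PP. Evd b a d \<and> badd J b a d c}
        = (\<integral>\<^sup>+ d. indicator {d \<in> space PP. Evd b a d \<and> badd J b a d c} d \<partial>PP)"
      by (rule nn_integral_indicator[symmetric]) (unfold PP_def, measurable)
    also have "\<dots> = (\<integral>\<^sup>+ d. F c d \<partial>PP)"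
      by (intro nn_integral_cong) (auto simp: F_def indicator_def)
    finally show ?thesis unfolding PP_def U .
  qed
  have split: "(\<integral>\<^sup>+ d. F c d \<partial>PiM (insert i (insert j R)) (\<lambda>_. mu))
     = (\<integral>\<^sup>+ x'. \<integral>\<^sup>+ y'. \<integral>\<^sup>+ y. F c (x'(j := y', i := y)) \<partial>mu \<partial>mu \<partial>PiM R (\<lambda>_. mu))" for c
  proof -
    have "(\<integral>\<^sup>+ d. F c d \<partial>PiM (insert i (insert j R)) (\<lambda>_. mu))
       = (\<integral>\<^sup>+ x. \<integral>\<^sup>+ y. F c (x(i := y)) \<partial>mu \<partial>PiM (insert j R) (\<lambda>_. mu))"
      by (rule PS.product_nn_integral_insert) (use fin in auto)
    also have "\<dots> = (\<integral>\<^sup>+ x'. \<integral>\<^sup>+ y'. \<integral>\<^sup>+ y. F c (x'(j := y', i := y)) \<partial>mu \<partial>mu \<partial>PiM R (\<lambda>_. mu))"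
      by (rule PS.product_nn_integral_insert) (use fin in auto, measurable)
    finally show ?thesis .
  qed
  define k where "k = b i"
  have pt: "(\<integral>\<^sup>+ y'. \<integral>\<^sup>+ y. F i (x'(j := y', i := y)) \<partial>mu \<partial>mu)
      \<le> ennreal (1 + eps) * (\<integral>\<^sup>+ y'. \<integral>\<^sup>+ y. F j (x'(j := y', i := y)) \<partial>mu \<partial>mu)" for x'
  proof (cases "\<forall>q\<in>R. cnd b a q (x' q)")
    case True
    have ci: "(if cnd b a i y then 1 else (0::ennreal)) = indk k False y" for y
      using ai unfolding cnd_def indk_def k_def by auto
    have cj: "(if cnd b a j y' then 1 else (0::ennreal)) = indk k (a j) y'" for y'
      using bij unfolding cnd_def indk_def k_def by auto
    have Fi: "F i (x'(j := y', i := y)) = indk k False y * indk k (a j) y' * hh J b a i j x' (fst y, fst (snd y)) (fst y', fst (snd y'))" for y y'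
      using badd_upd_i[OF ij(3), where J=J and b=b and a=a and x'=x' and y'=y' and y=y] ci[of y] cj[of y']
      unfolding F_def Evd_upd[OF U ij(3) fin(5) fin(4)] using True by (auto split: if_splits)
    have Fj: "F j (x'(j := y', i := y)) = indk k False y * indk k (a j) y' * hh J b a i j x' (fst y', fst (snd y')) (fst y, fst (snd y))" for y y'
      using badd_upd_j[OF ij(3) J bij, where a=a and x'=x' and y'=y' and y=y] ci[of y] cj[of y']
      unfolding F_def Evd_upd[OF U ij(3) fin(5) fin(4)] using True by (auto split: if_splits)
    show ?thesis unfolding Fi Fj by (rule two_point[OF n hh_meas])
  next
    case False
    then have "F c (x'(j := y', i := y)) = 0" for c y y'
      unfolding F_def Evd_upd[OF U ij(3) fin(5) fin(4)] by auto
    then show ?thesis by simp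
  qed
  have "emeasure PP {d \<in> space PP. Evd b a d \<and> badd J b a d i}
     = (\<integral>\<^sup>+ x'. \<integral>\<^sup>+ y'. \<integral>\<^sup>+ y. F i (x'(j := y', i := y)) \<partial>mu \<partial>mu \<partial>PiM R (\<lambda>_. mu))"
    unfolding em split ..
  also have "\<dots> \<le> (\<integral>\<^sup>+ x'. ennreal (1 + eps) * (\<integral>\<^sup>+ y'. \<integral>\<^sup>+ y. F j (x'(j := y', i := y)) \<partial>mu \<partial>mu) \<partial>PiM R (\<lambda>_. mu))"
    by (intro nn_integral_mono pt)
  also have "\<dots> = ennreal (1 + eps) * (\<integral>\<^sup>+ x'. \<integral>\<^sup>+ y'. \<integral>\<^sup>+ y. F j (x'(j := y', i := y)) \<partial>mu \<partial>mu \<partial>PiM R (\<lambda>_. mu))"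
    by (rule nn_integral_cmult) measurable
  also have "\<dots> = ennreal (1 + eps) * emeasure PP {d \<in> space PP. Evd b a d \<and> badd J b a d j}"
    unfolding em split ..
  finally show ?thesis .
qed

end


context mt5 begin

lemma PP_prob: "0 < n \<Longrightarrow> prob_space PP"
  unfolding PP_def by (intro prob_space_PiM mu_prob)

lemma sets_PP_Evd[measurable]: "{d \<in> space PP. Evd b a d} \<in> sets PP"
  unfolding PP_def by measurable
lemma sets_PP_badd[measurable]: "{d \<in> space PP. Evd b a d \<and> badd J b a d i} \<in> sets PP"
  unfolding PP_def by measurable
lemma sets_PP_covd[measurable]: "{d \<in> space PP. Evd b a d \<and> covd J b a d i} \<in> sets PP"
  unfolding PP_def by measurable

lemma group:
  assumes U: "U \<subseteq> {..<n}" and Jdef: "J = U \<union> {q\<in>{..<n}. a q}"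
  shows "(1 - alpha - eps) * real (card {i\<in>U. \<not> a i}) * measure PP {d \<in> space PP. Evd b a d}
     \<le> (\<Sum>i\<in>{i\<in>U. \<not> a i}. measure PP {d \<in> space PP. Evd b a d \<and> covd J b a d i})"
proof (cases "{i\<in>U. \<not> a i} = {}")
  case True then show ?thesis by (simp only: True card.empty sum.empty)
next
  case False
  then obtain i0 where "i0 \<in> U" by auto
  then have n: "0 < n" using U by auto
  interpret PP: prob_space PP by (rule PP_prob[OF n])
  have J: "finite J" "J \<subseteq> {..<n}" using U unfolding Jdef by (auto intro: finite_subset)
  have I0: "{i\<in>J. \<not> a i} = {i\<in>U. \<not> a i}" unfolding Jdef by auto
  define N0 where "N0 = card {i\<in>U. \<not> a i}"
  have N0J: "Nzero J a = N0" unfolding Nzero_def N0_def I0 ..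
  have N0pos: "0 < N0" unfolding N0_def using False J U by (subst card_gt_0_iff) (auto intro: finite_subset)
  define E where "E = {d \<in> space PP. Evd b a d}"
  define PE where "PE = measure PP E"
  define Pb where "Pb q = measure PP {d \<in> space PP. Evd b a d \<and> badd J b a d q}" for q
  have Pb0: "0 \<le> Pb q" for q unfolding Pb_def by simp
  have intI: "integrable PP (indicator {d \<in> space PP. Evd b a d \<and> badd J b a d q} :: _ \<Rightarrow> real)" for q
    by (intro integrable_real_indicator) (auto simp: PP.emeasure_eq_measure)
  have a1: "Pb i \<le> (1 + eps) * Pb q" if i: "i \<in> J" "\<not> a i" and q: "q \<in> J" "b q = b i" for i q
  proof (cases "q = i")
    case True then show ?thesis using Pb0[of i] eps by (simp add: algebra_simps)
  next
    case False
    have "ennreal (Pb i) \<le> ennreal (1 + eps) * ennreal (Pb q)"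
      using swap[of i q J b a] i q False J unfolding Pb_def
      by (auto simp: PP.emeasure_eq_measure)
    also have "\<dots> = ennreal ((1 + eps) * Pb q)" using eps Pb0[of q] by (simp add: ennreal_mult)
    finally show ?thesis using eps Pb0[of q] by (subst (asm) ennreal_le_iff) auto
  qed
  have b1: "real (Nbin J b (b i)) * Pb i \<le> (1 + eps) * (\<Sum>q\<in>{q\<in>J. b q = b i}. Pb q)"
    if i: "i \<in> J" "\<not> a i" for i
  proof -
    have "real (Nbin J b (b i)) * Pb i = (\<Sum>q\<in>{q\<in>J. b q = b i}. Pb i)" unfolding Nbin_def by simp
    also have "\<dots> \<le> (\<Sum>q\<in>{q\<in>J. b q = b i}. (1 + eps) * Pb q)"
      by (intro sum_mono a1) (use i in auto)
    finally show ?thesis by (simp add: sum_distrib_left)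
  qed
  have c1: "(\<Sum>i\<in>{i\<in>J. \<not> a i}. Pb i) \<le> (1 + eps) * real N0 * (\<Sum>q\<in>J. wgt J b a q * Pb q)"
  proof -
    have "(\<Sum>i\<in>{i\<in>J. \<not> a i}. Pb i) \<le> (\<Sum>i\<in>{i\<in>J. \<not> a i}. (1 + eps) * ((\<Sum>q\<in>{q\<in>J. b q = b i}. Pb q) / real (Nbin J b (b i))))"
    proof (intro sum_mono)
      fix i assume i: "i \<in> {i\<in>J. \<not> a i}"
      have Np: "0 < real (Nbin J b (b i))" using Nbin_pos[OF J(1)] i by auto
      show "Pb i \<le> (1 + eps) * ((\<Sum>q\<in>{q\<in>J. b q = b i}. Pb q) / real (Nbin J b (b i)))"
        using b1[of i] i Np by (simp add: field_simps)
    qed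
    also have "\<dots> = (1 + eps) * (\<Sum>q\<in>J. real (Nbin0 J b a (b q)) * Pb q / real (Nbin J b (b q)))"
      unfolding count_swap[OF J(1), symmetric] sum_distrib_left by (intro sum.cong refl)
    also have "(\<Sum>q\<in>J. real (Nbin0 J b a (b q)) * Pb q / real (Nbin J b (b q))) = real N0 * (\<Sum>q\<in>J. wgt J b a q * Pb q)"
      unfolding sum_distrib_left wgt_def N0J using N0pos by (intro sum.cong refl) (simp add: field_simps)
    finally show ?thesis by (simp add: mult.assoc)
  qed
  have d1: "(\<Sum>q\<in>J. wgt J b a q * Pb q) \<le> alpha * PE"
  proof -
    have w1: "(\<Sum>q\<in>J. wgt J b a q) = 1" using wsum1[OF J(1)] N0J N0pos by simp
    have "(\<Sum>q\<in>J. wgt J b a q * Pb q)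
        = (\<integral>d. (\<Sum>q\<in>J. wgt J b a q * indicator {d \<in> space PP. Evd b a d \<and> badd J b a d q} d) \<partial>PP)"
      unfolding Pb_def
      by (subst Bochner_Integration.integral_sum) (auto simp: Int_absorb2 PP.emeasure_eq_measure)
    also have "\<dots> \<le> (\<integral>d. alpha * indicator E d \<partial>PP)"
    proof (rule Bochner_Integration.integral_mono)
      show "integrable PP (\<lambda>d. \<Sum>q\<in>J. wgt J b a q * indicator {d \<in> space PP. Evd b a d \<and> badd J b a d q} d)"
        by (intro Bochner_Integration.integrable_sum integrable_mult_right intI)
      show "integrable PP (\<lambda>d. alpha * indicator E d)"
        unfolding E_def by (intro integrable_mult_right integrable_real_indicator) (auto simp: PP.emeasure_eq_measure)
      fix d assume d: "d \<in> space PP"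
      show "(\<Sum>q\<in>J. wgt J b a q * indicator {d \<in> space PP. Evd b a d \<and> badd J b a d q} d) \<le> alpha * indicator E d"
      proof (cases "Evd b a d")
        case True
        have "(\<Sum>q\<in>J. wgt J b a q * indicator {d \<in> space PP. Evd b a d \<and> badd J b a d q} d)
           = (\<Sum>q\<in>J. if 1 - alpha \<le> (\<Sum>q'\<in>J. if sc d q' < sc d q then wgt J b a q' else 0) then wgt J b a q else 0)"
          using d True by (intro sum.cong refl) (auto simp: indicator_def badd_def)
        also have "\<dots> \<le> 1 - (1 - alpha)"
          by (rule quantile_mass[OF J(1) wgt_nonneg w1]) (use alpha in auto)
        finally show ?thesis using d True by (simp add: E_def)
      next
        case False
        then show ?thesis using alpha by (simp add: E_def indicator_def)
      qed
    qed
    also have "\<dots> = alpha * PE" unfolding PE_def E_def by (simp add: Int_absorb2)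
    finally show ?thesis .
  qed
  have e1: "PE - Pb i \<le> measure PP {d \<in> space PP. Evd b a d \<and> covd J b a d i}" if i: "i \<in> J" for i
  proof -
    have sub: "E \<subseteq> {d \<in> space PP. Evd b a d \<and> covd J b a d i} \<union> {d \<in> space PP. Evd b a d \<and> badd J b a d i}"
    proof
      fix d assume d: "d \<in> E"
      show "d \<in> {d \<in> space PP. Evd b a d \<and> covd J b a d i} \<union> {d \<in> space PP. Evd b a d \<and> badd J b a d i}"
      proof (cases "covd J b a d i")
        case False
        have "(\<Sum>q\<in>{q\<in>J. a q}. if sc d q < sc d i then wgt J b a q else 0) \<le> (\<Sum>q\<in>J. if sc d q < sc d i then wgt J b a q else 0)"
          by (rule sum_mono2[OF J(1)]) (auto simp: wgt_nonneg)
        then have "badd J b a d i" using False unfolding covd_def badd_def by linarith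
        then show ?thesis using d unfolding E_def by auto
      qed (use d in \<open>auto simp: E_def\<close>)
    qed
    have "PE \<le> measure PP ({d \<in> space PP. Evd b a d \<and> covd J b a d i} \<union> {d \<in> space PP. Evd b a d \<and> badd J b a d i})"
      unfolding PE_def by (rule PP.finite_measure_mono[OF sub]) measurable
    also have "\<dots> \<le> measure PP {d \<in> space PP. Evd b a d \<and> covd J b a d i} + Pb i"
      unfolding Pb_def by (rule measure_Un_le) measurable
    finally show ?thesis by simp
  qed
  have PE0: "0 \<le> PE" unfolding PE_def by simp
  have "(\<Sum>i\<in>{i\<in>U. \<not> a i}. measure PP {d \<in> space PP. Evd b a d \<and> covd J b a d i})
      \<ge> (\<Sum>i\<in>{i\<in>J. \<not> a i}. PE - Pb i)"
    unfolding I0[symmetric] by (intro sum_mono e1) auto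
  moreover have "(\<Sum>i\<in>{i\<in>J. \<not> a i}. PE - Pb i) = real N0 * PE - (\<Sum>i\<in>{i\<in>J. \<not> a i}. Pb i)"
    by (simp add: sum_subtractf I0 N0_def)
  moreover have "(\<Sum>i\<in>{i\<in>J. \<not> a i}. Pb i) \<le> (1 + eps) * real N0 * (alpha * PE)"
    using c1 d1 eps N0pos by (smt (verit) mult_left_mono of_nat_0_le_iff mult_nonneg_nonneg)
  moreover have "(1 + eps) * real N0 * (alpha * PE) \<le> (alpha + eps) * (real N0 * PE)"
  proof -
    have "(1 + eps) * alpha \<le> alpha + eps" using alpha eps by (simp add: algebra_simps)
    then have "((1 + eps) * alpha) * (real N0 * PE) \<le> (alpha + eps) * (real N0 * PE)"
      using PE0 by (intro mult_right_mono) auto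
    then show ?thesis by (simp add: ac_simps)
  qed
  ultimately show ?thesis unfolding N0_def[symmetric] PE_def E_def by (simp add: algebra_simps)
qed

end


lemma pro_thr_cong:
  assumes "\<And>q. q \<in> J \<Longrightarrow> b q = b' q \<and> a q = a' q \<and> S q = S' q"
  shows "pro_thr alpha J b a S = pro_thr alpha J b' a' S'"
proof -
  have N: "Nbin J b k = Nbin J b' k" for k
  proof -
    have "{i \<in> J. b i = k} = {i \<in> J. b' i = k}" using assms by auto
    then show ?thesis unfolding Nbin_def by simp
  qed
  have N0: "Nbin0 J b a k = Nbin0 J b' a' k" for k
  proof -
    have "{i \<in> J. b i = k \<and> \<not> a i} = {i \<in> J. b' i = k \<and> \<not> a' i}" using assms by auto
    then show ?thesis unfolding Nbin0_def by simp
  qed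
  have Z: "Nzero J a = Nzero J a'"
  proof -
    have "{i \<in> J. \<not> a i} = {i \<in> J. \<not> a' i}" using assms by auto
    then show ?thesis unfolding Nzero_def by simp
  qed
  have im: "b ` J = b' ` J" using assms by (auto simp: image_def)
  have s1: "{i \<in> J. a i} = {i \<in> J. a' i}" using assms by auto
  have "pro_cdf J b a S t = pro_cdf J b' a' S' t" for t
    unfolding pro_cdf_def im Z s1
  proof (rule arg_cong2[where f="(+)"])
    show "(\<Sum>i\<in>{i \<in> J. a' i}. if ereal (S i) \<le> t then real (Nbin0 J b a (b i)) / (real (Nzero J a') * real (Nbin J b (b i))) else 0)
      = (\<Sum>i\<in>{i \<in> J. a' i}. if ereal (S' i) \<le> t then real (Nbin0 J b' a' (b' i)) / (real (Nzero J a') * real (Nbin J b' (b' i))) else 0)"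
      by (rule sum.cong[OF refl]) (use assms in \<open>simp add: N N0\<close>)
    show "(if \<infinity> \<le> t then 1 / real (Nzero J a') * (\<Sum>k\<in>b' ` J. (real (Nbin0 J b a k))\<^sup>2 / real (Nbin J b k)) else 0)
      = (if \<infinity> \<le> t then 1 / real (Nzero J a') * (\<Sum>k\<in>b' ` J. (real (Nbin0 J b' a' k))\<^sup>2 / real (Nbin J b' k)) else 0)"
      by (simp add: N N0)
  qed
  then show ?thesis unfolding pro_thr_def by simp
qed

context mt5 begin

definition "D \<omega> = (\<lambda>q\<in>{..<n}. Z q \<omega>)"

lemma D_measZ: "D \<in> measurable M (PiM {..<n} (\<lambda>_. MZ))"
  unfolding D_def by (intro measurable_restrict Z_meas) auto

lemma D_meas: "D \<in> measurable M PP"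
proof -
  have sP: "sets (PiM {..<n} (\<lambda>_. MZ)) = sets PP" unfolding PP_def by (intro sets_PiM_cong) (auto simp: sets_mu)
  have "measurable M (PiM {..<n} (\<lambda>_. MZ)) = measurable M PP" by (rule measurable_cong_sets[OF refl sP])
  then show ?thesis using D_measZ by simp
qed

lemma law: "0 < n \<Longrightarrow> distr M PP D = PP"
proof -
  assume n: "0 < n"
  interpret prob_space M by (rule P)
  have rv: "\<And>i. i \<in> {..<n} \<Longrightarrow> random_variable MZ (Z i)" using Z_meas by auto
  have iv: "indep_vars (\<lambda>_. MZ) Z {..<n}"
    using iid_indep unfolding Z_def[abs_def] .
  have "distr M (PiM {..<n} (\<lambda>_. MZ)) (\<lambda>x. \<lambda>i\<in>{..<n}. Z i x) = PiM {..<n} (\<lambda>i. distr M MZ (Z i))"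
    using indep_vars_iff_distr_eq_PiM'[where I="{..<n}" and M'="\<lambda>_. MZ" and X=Z, OF _ rv] iv n by auto
  also have "\<dots> = PP" unfolding PP_def mu_def
  proof (intro PiM_cong refl)
    fix i assume "i \<in> {..<n}"
    then show "distr M MZ (Z i) = distr M MZ (Z 0)"
      using iid_ident[of i 0] n unfolding Z_def[abs_def] by auto
  qed
  finally have "distr M (PiM {..<n} (\<lambda>_. MZ)) D = PP" unfolding D_def[abs_def] .
  moreover have "distr M (PiM {..<n} (\<lambda>_. MZ)) D = distr M PP D"
    by (rule distr_cong[OF refl]) (auto simp: PP_def intro!: sets_PiM_cong sets_mu[symmetric])
  ultimately show ?thesis by simp
qed

end


lemma pred_eq_nat[measurable (raw)]:
  fixes f h :: "'a \<Rightarrow> nat"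
  assumes f: "f \<in> measurable MR (count_space UNIV)" and h: "h \<in> measurable MR (count_space UNIV)"
  shows "Measurable.pred MR (\<lambda>r. f r = h r)"
proof -
  have "(\<lambda>r. (f r, h r)) \<in> measurable MR (count_space UNIV \<Otimes>\<^sub>M count_space UNIV)"
    using f h by measurable
  then have fh: "(\<lambda>r. (f r, h r)) \<in> measurable MR (count_space UNIV)"
    by (simp add: pair_measure_countable)
  have "(\<lambda>(x::nat, y::nat). x = y) \<in> measurable (count_space UNIV) (count_space UNIV)" by simp
  from measurable_compose[OF fh this] show ?thesis by simp
qed

context mt5 begin


lemma cover_link:
  assumes w: "\<omega> \<in> space M" and Ev: "\<forall>q<n. bin_of eps (p (X q \<omega>)) = b q \<and> A q \<omega> = a q"
    and J: "J \<subseteq> {..<n}" and i: "i < n"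
  shows "Y i \<omega> \<in> C_pro alpha J (\<lambda>i. bin_of eps (p (X i \<omega>))) (\<lambda>i. A i \<omega>) (\<lambda>i. s (X i \<omega>) (Y i \<omega>)) s (X i \<omega>)
     \<longleftrightarrow> covd J b a (D \<omega>) i"
proof -
  have fJ: "finite J" using J finite_subset by blast
  have sc: "sc (D \<omega>) q = s (X q \<omega>) (Y q \<omega>)" if "q < n" for q
    using that by (simp add: sc_def D_def Z_def)
  have "pro_thr alpha J (\<lambda>i. bin_of eps (p (X i \<omega>))) (\<lambda>i. A i \<omega>) (\<lambda>i. s (X i \<omega>) (Y i \<omega>))
      = pro_thr alpha J b a (sc (D \<omega>))"
    by (rule pro_thr_cong) (use J Ev sc in auto)
  then show ?thesis
    unfolding C_pro_def covd_def using cover_iff[OF fJ alpha(2)] sc[OF i] by simp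
qed

lemma main:
  fixes MR :: "'r measure" and xi :: "'w \<Rightarrow> 'r"
    and g :: "(nat \<Rightarrow> int) \<Rightarrow> (nat \<Rightarrow> bool) \<Rightarrow> 'r \<Rightarrow> nat \<Rightarrow> nat"
    and b :: "nat \<Rightarrow> int" and a :: "nat \<Rightarrow> bool"
  assumes xi_rv: "xi \<in> measurable M MR"
    and xi_indep: "prob_space.indep_set M
        (sets (vimage_algebra (space M) (\<lambda>\<omega>. \<lambda>i\<in>{..<n}. (X i \<omega>, Y i \<omega>, A i \<omega>))
           (\<Pi>\<^sub>M i\<in>{..<n}. MX \<Otimes>\<^sub>M MY \<Otimes>\<^sub>M count_space (UNIV :: bool set))))
        (sets (vimage_algebra (space M) xi MR))"
    and g_meas: "\<And>b a i. (\<lambda>r. g b a r i) \<in> measurable MR (count_space UNIV)"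
  shows "(1 - alpha - eps) *
       measure M {\<omega> \<in> space M. \<forall>i<n. bin_of eps (p (X i \<omega>)) = b i \<and> A i \<omega> = a i}
     \<le> (\<integral>\<omega>. cov_U alpha n
              (g (\<lambda>i\<in>{..<n}. bin_of eps (p (X i \<omega>))) (\<lambda>i\<in>{..<n}. A i \<omega>) (xi \<omega>))
              (\<lambda>i. bin_of eps (p (X i \<omega>))) (\<lambda>i. A i \<omega>) s (\<lambda>i. X i \<omega>) (\<lambda>i. Y i \<omega>)
            * indicator {\<omega> \<in> space M. \<forall>i<n. bin_of eps (p (X i \<omega>)) = b i \<and> A i \<omega> = a i} \<omega>
          \<partial>M)"
proof -
  interpret prob_space M by (rule P)
  note g_meas[measurable]
  define EvM where "EvM = {\<omega> \<in> space M. \<forall>i<n. bin_of eps (p (X i \<omega>)) = b i \<and> A i \<omega> = a i}"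
  have EvD: "Evd b a (D \<omega>) \<longleftrightarrow> (\<forall>i<n. bin_of eps (p (X i \<omega>)) = b i \<and> A i \<omega> = a i)" for \<omega>
    by (auto simp: Evd_def cnd_def D_def Z_def)
  have EvM_eq: "EvM = {\<omega> \<in> space M. Evd b a (D \<omega>)}" unfolding EvM_def EvD ..
  define I0 where "I0 = {i\<in>{..<n}. \<not> a i}"
  define I1 where "I1 = {i\<in>{..<n}. a i}"
  define gb where "gb r = g (restrict b {..<n}) (restrict a {..<n}) r" for r
  define Ul where "Ul i \<omega> = {j\<in>{..<n}. gb (xi \<omega>) j = gb (xi \<omega>) i}" for i \<omega>
  define B where "B i U = {\<omega> \<in> space M. Ul i \<omega> = U}" for i U
  define C where "C i U = {\<omega> \<in> space M. Evd b a (D \<omega>) \<and> covd (U \<union> I1) b a (D \<omega>) i}" for i U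
  define F where "F \<omega> = cov_U alpha n
              (g (\<lambda>i\<in>{..<n}. bin_of eps (p (X i \<omega>))) (\<lambda>i\<in>{..<n}. A i \<omega>) (xi \<omega>))
              (\<lambda>i. bin_of eps (p (X i \<omega>))) (\<lambda>i. A i \<omega>) s (\<lambda>i. X i \<omega>) (\<lambda>i. Y i \<omega>)
            * indicator EvM \<omega>" for \<omega>
  define Phi where "Phi \<omega> = (if I0 = {} then indicator EvM \<omega>
     else (1 / real (card I0)) * (\<Sum>i\<in>I0. \<Sum>U\<in>Pow {..<n}. indicator (B i U \<inter> C i U) \<omega>))" for \<omega>
  have FPhi: "F \<omega> = Phi \<omega>" if w: "\<omega> \<in> space M" for \<omega>
  proof (cases "\<omega> \<in> EvM")
    case False
    then have "\<omega> \<notin> C i U" for i U unfolding C_def EvM_eq by auto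
    then show ?thesis using False unfolding F_def Phi_def by (auto simp: indicator_def)
  next
    case True
    then have Ev: "\<forall>q<n. bin_of eps (p (X q \<omega>)) = b q \<and> A q \<omega> = a q" unfolding EvM_def by auto
    have rb: "(\<lambda>i\<in>{..<n}. bin_of eps (p (X i \<omega>))) = restrict b {..<n}"
      using Ev by (auto simp: fun_eq_iff)
    have ra: "(\<lambda>i\<in>{..<n}. A i \<omega>) = restrict a {..<n}"
      using Ev by (auto simp: fun_eq_iff)
    have I0w: "{i \<in> {..<n}. \<not> A i \<omega>} = I0" using Ev unfolding I0_def by auto
    have I1w: "{i \<in> {..<n}. A i \<omega>} = I1" using Ev unfolding I1_def by auto
    have inner: "(\<Sum>U\<in>Pow {..<n}. indicator (B i U \<inter> C i U) \<omega>)
        = (if covd (Ul i \<omega> \<union> I1) b a (D \<omega>) i then 1 else (0::real))" for i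
    proof -
      have "(\<Sum>U\<in>Pow {..<n}. indicator (B i U \<inter> C i U) \<omega>)
          = (\<Sum>U\<in>Pow {..<n}. if U = Ul i \<omega> then (if covd (U \<union> I1) b a (D \<omega>) i then 1 else (0::real)) else 0)"
        using w True unfolding B_def C_def EvM_eq by (intro sum.cong refl) (auto simp: indicator_def)
      also have "\<dots> = (if covd (Ul i \<omega> \<union> I1) b a (D \<omega>) i then 1 else 0)"
        using sum.delta[of "Pow {..<n}" "Ul i \<omega>" "\<lambda>U. if covd (U \<union> I1) b a (D \<omega>) i then 1 else (0::real)"]
        by (auto simp: Ul_def)
      finally show ?thesis .
    qed
    have cl: "(Y i \<omega> \<in> C_pro alpha ({j \<in> {..<n}. gb (xi \<omega>) j = gb (xi \<omega>) i} \<union> I1) (\<lambda>i. bin_of eps (p (X i \<omega>))) (\<lambda>i. A i \<omega>) (\<lambda>i. s (X i \<omega>) (Y i \<omega>)) s (X i \<omega>))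
       \<longleftrightarrow> covd (Ul i \<omega> \<union> I1) b a (D \<omega>) i" if "i \<in> I0" for i
    proof -
      have Jsub: "Ul i \<omega> \<union> I1 \<subseteq> {..<n}" by (auto simp: Ul_def I1_def)
      have "i < n" using that by (auto simp: I0_def)
      from cover_link[OF w Ev Jsub this] show ?thesis unfolding Ul_def .
    qed
    show ?thesis
      unfolding F_def Phi_def cov_U_def Let_def rb ra I0w I1w gb_def[symmetric]
      using True cl by (auto simp: inner intro!: sum.cong)
  qed

  have goal_eq: "(\<integral>\<omega>. cov_U alpha n
              (g (\<lambda>i\<in>{..<n}. bin_of eps (p (X i \<omega>))) (\<lambda>i\<in>{..<n}. A i \<omega>) (xi \<omega>))
              (\<lambda>i. bin_of eps (p (X i \<omega>))) (\<lambda>i. A i \<omega>) s (\<lambda>i. X i \<omega>) (\<lambda>i. Y i \<omega>)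
            * indicator {\<omega> \<in> space M. \<forall>i<n. bin_of eps (p (X i \<omega>)) = b i \<and> A i \<omega> = a i} \<omega>
          \<partial>M) = (\<integral>\<omega>. Phi \<omega> \<partial>M)"
    unfolding EvM_def[symmetric] F_def[symmetric] by (intro Bochner_Integration.integral_cong refl FPhi)
  note D_measZ[measurable]
  have Dsp: "D \<omega> \<in> space (PiM {..<n} (\<lambda>_. MZ))" if "\<omega> \<in> space M" for \<omega>
    using measurable_space[OF D_measZ that] .
  have Dsp': "D \<omega> \<in> space PP" if "\<omega> \<in> space M" for \<omega>
    using measurable_space[OF D_meas that] .
  have Cev[measurable]: "C i U \<in> events" for i U unfolding C_def by measurable
  have EvMev[measurable]: "EvM \<in> events" unfolding EvM_eq by measurable
  define Rs where "Rs i U = {r \<in> space MR. (\<forall>j\<in>U. gb r j = gb r i) \<and> (\<forall>j\<in>{..<n} - U. gb r j \<noteq> gb r i)}" for i U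
  have Rs_sets: "Rs i U \<in> sets MR" for i U unfolding Rs_def gb_def by measurable
  have B_eq: "B i U = xi -` Rs i U \<inter> space M" if "U \<subseteq> {..<n}" for i U
    using that measurable_space[OF xi_rv] unfolding B_def Rs_def Ul_def by auto
  have Bev[measurable]: "B i U \<in> events" if "U \<subseteq> {..<n}" for i U
    unfolding B_eq[OF that] using xi_rv Rs_sets by (rule measurable_sets)
  have xif: "xi \<in> space M \<rightarrow> space MR" using xi_rv by (auto dest: measurable_space)
  have Df: "D \<in> space M \<rightarrow> space (PiM {..<n} (\<lambda>_. MZ))" using Dsp by auto
  have Bvim: "B i U \<in> sets (vimage_algebra (space M) xi MR)" if "U \<subseteq> {..<n}" for i U
    unfolding sets_vimage_algebra2[OF xif] B_eq[OF that] using Rs_sets by blast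
  have Dfun: "(\<lambda>\<omega>. \<lambda>i\<in>{..<n}. (X i \<omega>, Y i \<omega>, A i \<omega>)) = D" by (simp add: D_def Z_def fun_eq_iff)
  have Cvim: "C i U \<in> sets (vimage_algebra (space M) D (\<Pi>\<^sub>M i\<in>{..<n}. MZ))" for i U
  proof -
    define T where "T = {d \<in> space (PiM {..<n} (\<lambda>_. MZ)). Evd b a d \<and> covd (U \<union> I1) b a d i}"
    have T: "T \<in> sets (PiM {..<n} (\<lambda>_. MZ))" unfolding T_def by measurable
    have "C i U = D -` T \<inter> space M" unfolding C_def T_def using Dsp by auto
    then show ?thesis
      unfolding sets_vimage_algebra2[OF Df] using T by blast
  qed
  have indep: "measure M (B i U \<inter> C i U) = measure M (C i U) * measure M (B i U)" if "U \<subseteq> {..<n}" for i U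
    using indep_setD[OF xi_indep[unfolded Dfun] Cvim Bvim[OF that]] by (simp add: Int_commute)
  have fin: "(1 - alpha - eps) * measure M EvM \<le> (\<integral>\<omega>. Phi \<omega> \<partial>M)"
  proof (cases "I0 = {}")
    case True
    have "(\<integral>\<omega>. Phi \<omega> \<partial>M) = measure M EvM"
      unfolding Phi_def using True by (simp add: Int_absorb2 sets.sets_into_space)
    moreover have "(1 - alpha - eps) * measure M EvM \<le> measure M EvM"
      using alpha eps mult_right_mono[of "1 - alpha - eps" 1 "measure M EvM"] by simp
    ultimately show ?thesis by simp
  next
    case False
    then obtain i1 where "i1 \<in> I0" by auto
    then have n: "0 < n" unfolding I0_def by auto
    have lawP: "measure M (D -` T \<inter> space M) = measure PP T" if "T \<in> sets PP" for T
      using measure_distr[OF D_meas that] law[OF n] by simp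
    define cP where "cP i U = measure PP {d \<in> space PP. Evd b a d \<and> covd (U \<union> I1) b a d i}" for i U
    define be where "be i U = measure M (B i U)" for i U
    define PE where "PE = measure PP {d \<in> space PP. Evd b a d}"
    define ka where "ka = 1 - alpha - eps"
    define N0 where "N0 = card I0"
    have fI0': "finite I0" unfolding I0_def by auto
    have N0pos: "0 < N0" unfolding N0_def using False fI0' by (simp add: card_gt_0_iff)
    have cPeq: "measure M (C i U) = cP i U" for i U
    proof -
      have "C i U = D -` {d \<in> space PP. Evd b a d \<and> covd (U \<union> I1) b a d i} \<inter> space M"
        unfolding C_def using Dsp' by auto
      then show ?thesis unfolding cP_def using lawP[OF sets_PP_covd[of b a "U \<union> I1" i]] by simp
    qed
    have PEeq: "measure M EvM = PE"
    proof -
      have "EvM = D -` {d \<in> space PP. Evd b a d} \<inter> space M"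
        unfolding EvM_eq using Dsp' by auto
      then show ?thesis unfolding PE_def using lawP[OF sets_PP_Evd[of b a]] by simp
    qed
    have PE0: "0 \<le> PE" unfolding PE_def by simp
    have intPhi: "(\<integral>\<omega>. Phi \<omega> \<partial>M) = (1 / real N0) * (\<Sum>i\<in>I0. \<Sum>U\<in>Pow {..<n}. be i U * cP i U)"
    proof -
      have "(\<integral>\<omega>. Phi \<omega> \<partial>M) = (\<integral>\<omega>. (1 / real N0) * (\<Sum>i\<in>I0. \<Sum>U\<in>Pow {..<n}. indicator (B i U \<inter> C i U) \<omega>) \<partial>M)"
        unfolding Phi_def N0_def using False by simp
      also have "\<dots> = (1 / real N0) * (\<Sum>i\<in>I0. \<Sum>U\<in>Pow {..<n}. (\<integral>\<omega>. indicator (B i U \<inter> C i U) \<omega> \<partial>M))"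
      proof -
        have intBC: "integrable M (indicator (B i U \<inter> C i U) :: _ \<Rightarrow> real)" if "U \<subseteq> {..<n}" for i U
          using Bev[of U i, OF that] Cev[of i U] by (intro integrable_real_indicator) (auto simp: emeasure_eq_measure)
        have "(\<integral>\<omega>. (\<Sum>i\<in>I0. \<Sum>U\<in>Pow {..<n}. indicator (B i U \<inter> C i U) \<omega> :: real) \<partial>M)
          = (\<Sum>i\<in>I0. (\<integral>\<omega>. (\<Sum>U\<in>Pow {..<n}. indicator (B i U \<inter> C i U) \<omega>) \<partial>M))"
          apply (rule Bochner_Integration.integral_sum)
          apply (rule Bochner_Integration.integrable_sum)
          apply (rule intBC)
          apply auto
          done
        also have "\<dots> = (\<Sum>i\<in>I0. \<Sum>U\<in>Pow {..<n}. (\<integral>\<omega>. indicator (B i U \<inter> C i U) \<omega> \<partial>M))"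
          apply (intro sum.cong refl)
          apply (rule Bochner_Integration.integral_sum)
          apply (rule intBC)
          apply auto
          done
        finally show ?thesis by simp
      qed
      also have "\<dots> = (1 / real N0) * (\<Sum>i\<in>I0. \<Sum>U\<in>Pow {..<n}. be i U * cP i U)"
      proof -
        have "(\<integral>\<omega>. indicator (B i U \<inter> C i U) \<omega> \<partial>M) = be i U * cP i U" if "U \<in> Pow {..<n}" for i U
        proof -
          have "B i U \<inter> C i U \<subseteq> space M" unfolding B_def by auto
          then have "(\<integral>\<omega>. indicator (B i U \<inter> C i U) \<omega> \<partial>M) = measure M (B i U \<inter> C i U)"
            by (simp add: Int_absorb2)
          also have "\<dots> = be i U * cP i U" using indep[of U i] that unfolding be_def cPeq by simp
          finally show ?thesis .
        qed
        then show ?thesis by simp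
      qed
      finally show ?thesis .
    qed
    have B_empty: "B i U = {}" if "i \<in> I0" "i \<notin> U" for i U
      using that unfolding B_def Ul_def I0_def by auto
    have B_same: "B i U = B i' U" if "i \<in> U" "i' \<in> U" for i i' U
    proof -
      have "Ul i \<omega> = U \<longleftrightarrow> Ul i' \<omega> = U" for \<omega>
        using that unfolding Ul_def by auto
      then show ?thesis unfolding B_def by auto
    qed
    have be_sum1: "(\<Sum>U\<in>Pow {..<n}. be i U) = 1" for i
    proof -
      have intB: "integrable M (indicator (B i U) :: _ \<Rightarrow> real)" if "U \<subseteq> {..<n}" for U
        using Bev[of U i, OF that] by (intro integrable_real_indicator) (auto simp: emeasure_eq_measure)
      have BS: "B i U \<inter> space M = B i U" for U by (auto simp: B_def)
      have "(\<Sum>U\<in>Pow {..<n}. be i U) = (\<Sum>U\<in>Pow {..<n}. (\<integral>\<omega>. indicator (B i U) \<omega> \<partial>M))"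
        unfolding be_def by (intro sum.cong refl) (simp add: BS)
      also have "\<dots> = (\<integral>\<omega>. (\<Sum>U\<in>Pow {..<n}. indicator (B i U) \<omega> :: real) \<partial>M)"
        apply (rule Bochner_Integration.integral_sum[symmetric])
        apply (rule intB)
        apply auto
        done
      also have "\<dots> = (\<integral>\<omega>. 1 \<partial>M)"
      proof (intro Bochner_Integration.integral_cong refl)
        fix \<omega> assume w: "\<omega> \<in> space M"
        have "(\<Sum>U\<in>Pow {..<n}. indicator (B i U) \<omega>) = (\<Sum>U\<in>Pow {..<n}. if U = Ul i \<omega> then 1 else (0::real))"
          using w unfolding B_def by (intro sum.cong refl) (auto simp: indicator_def)
        also have "\<dots> = 1"
          using sum.delta[of "Pow {..<n}" "Ul i \<omega>" "\<lambda>_. 1::real"] by (auto simp: Ul_def)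
        finally show "(\<Sum>U\<in>Pow {..<n}. indicator (B i U) \<omega>) = (1::real)" .
      qed
      also have "\<dots> = 1" by (simp add: prob_space)
      finally show ?thesis .
    qed
    have perU: "ka * PE * (\<Sum>i\<in>I0. be i U) \<le> (\<Sum>i\<in>I0. be i U * cP i U)" if U: "U \<in> Pow {..<n}" for U
    proof (cases "{i\<in>U. \<not> a i} = {}")
      case True
      have "be i U = 0" if "i \<in> I0" for i
      proof -
        have "i \<notin> U" using True that unfolding I0_def by auto
        then show ?thesis using B_empty[OF that] unfolding be_def by simp
      qed
      then show ?thesis by simp
    next
      case False
      then obtain i0 where i0: "i0 \<in> U" "\<not> a i0" by auto
      have I0U: "{i\<in>I0. i \<in> U} = {i\<in>U. \<not> a i}" using U unfolding I0_def by auto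
      have fI0: "finite I0" unfolding I0_def by auto
      have beq: "be i U = (if i \<in> U then be i0 U else 0)" if "i \<in> I0" for i
        using that B_empty[of i U] B_same[of i U i0] i0 unfolding be_def by auto
      have be0: "0 \<le> be i0 U" unfolding be_def by simp
      have "(\<Sum>i\<in>I0. be i U) = (\<Sum>i\<in>I0. if i \<in> U then be i0 U else 0)"
        using beq by (intro sum.cong) auto
      also have "\<dots> = be i0 U * real (card {i\<in>U. \<not> a i})"
        using fI0 by (simp add: sum.inter_filter[symmetric] I0U)
      finally have s1: "(\<Sum>i\<in>I0. be i U) = be i0 U * real (card {i\<in>U. \<not> a i})" .
      have "(\<Sum>i\<in>I0. be i U * cP i U) = (\<Sum>i\<in>I0. if i \<in> U then be i0 U * cP i U else 0)"
        using beq by (intro sum.cong) auto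
      also have "\<dots> = be i0 U * (\<Sum>i\<in>{i\<in>U. \<not> a i}. cP i U)"
        using fI0 by (simp add: sum.inter_filter[symmetric] I0U sum_distrib_left)
      finally have s2: "(\<Sum>i\<in>I0. be i U * cP i U) = be i0 U * (\<Sum>i\<in>{i\<in>U. \<not> a i}. cP i U)" .
      have grp: "ka * real (card {i\<in>U. \<not> a i}) * PE \<le> (\<Sum>i\<in>{i\<in>U. \<not> a i}. cP i U)"
        unfolding ka_def cP_def PE_def I1_def by (rule group) (use U in auto)
      have "be i0 U * (ka * real (card {i\<in>U. \<not> a i}) * PE) \<le> be i0 U * (\<Sum>i\<in>{i\<in>U. \<not> a i}. cP i U)"
        by (rule mult_left_mono[OF grp be0])
      then show ?thesis unfolding s1 s2 by (simp add: ac_simps)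
    qed
    have "ka * PE * real N0 = ka * PE * (\<Sum>i\<in>I0. \<Sum>U\<in>Pow {..<n}. be i U)"
      by (simp add: be_sum1 N0_def)
    also have "\<dots> = (\<Sum>U\<in>Pow {..<n}. ka * PE * (\<Sum>i\<in>I0. be i U))"
      by (subst sum.swap) (simp add: sum_distrib_left)
    also have "\<dots> \<le> (\<Sum>U\<in>Pow {..<n}. \<Sum>i\<in>I0. be i U * cP i U)"
      by (intro sum_mono perU)
    also have "\<dots> = (\<Sum>i\<in>I0. \<Sum>U\<in>Pow {..<n}. be i U * cP i U)"
      by (rule sum.swap)
    finally have key: "ka * PE * real N0 \<le> (\<Sum>i\<in>I0. \<Sum>U\<in>Pow {..<n}. be i U * cP i U)" .
    have "ka * PE = (1 / real N0) * (ka * PE * real N0)" using N0pos by simp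
    also have "\<dots> \<le> (1 / real N0) * (\<Sum>i\<in>I0. \<Sum>U\<in>Pow {..<n}. be i U * cP i U)"
      by (rule mult_left_mono[OF key]) simp
    finally show ?thesis using intPhi PEeq unfolding ka_def by simp
  qed
  show ?thesis using fin goal_eq unfolding EvM_def by simp
qed

end

theorem mainTheorem5:
  fixes M :: "'w measure" and MX :: "'x measure" and MY :: "'y measure" and MR :: "'r measure"
    and X :: "nat \<Rightarrow> 'w \<Rightarrow> 'x" and Y :: "nat \<Rightarrow> 'w \<Rightarrow> 'y" and A :: "nat \<Rightarrow> 'w \<Rightarrow> bool"
    and xi :: "'w \<Rightarrow> 'r"
    and p :: "'x \<Rightarrow> real" and s :: "'x \<Rightarrow> 'y \<Rightarrow> real"
    and g :: "(nat \<Rightarrow> int) \<Rightarrow> (nat \<Rightarrow> bool) \<Rightarrow> 'r \<Rightarrow> nat \<Rightarrow> nat"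
    and n :: nat and alpha eps :: real
  assumes P: "prob_space M"
    and alpha: "0 < alpha" "alpha < 1" and eps: "0 < eps"
    and p_meas: "p \<in> borel_measurable MX"
    and p_range: "\<And>x. 0 < p x \<and> p x < 1"
    and s_meas: "(\<lambda>(x, y). s x y) \<in> borel_measurable (MX \<Otimes>\<^sub>M MY)"
    and X_rv: "\<And>i. i < n \<Longrightarrow> X i \<in> measurable M MX"
    and Y_rv: "\<And>i. i < n \<Longrightarrow> Y i \<in> measurable M MY"
    and A_rv: "\<And>i. i < n \<Longrightarrow> A i \<in> measurable M (count_space (UNIV :: bool set))"
    and xi_rv: "xi \<in> measurable M MR"
    and iid_indep: "prob_space.indep_vars M (\<lambda>_. MX \<Otimes>\<^sub>M MY \<Otimes>\<^sub>M count_space (UNIV :: bool set))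
                      (\<lambda>i \<omega>. (X i \<omega>, Y i \<omega>, A i \<omega>)) {..<n}"
    and iid_ident: "\<And>i j. i < n \<Longrightarrow> j < n \<Longrightarrow>
        distr M (MX \<Otimes>\<^sub>M MY \<Otimes>\<^sub>M count_space (UNIV :: bool set)) (\<lambda>\<omega>. (X i \<omega>, Y i \<omega>, A i \<omega>))
      = distr M (MX \<Otimes>\<^sub>M MY \<Otimes>\<^sub>M count_space (UNIV :: bool set)) (\<lambda>\<omega>. (X j \<omega>, Y j \<omega>, A j \<omega>))"
    and mar: "\<And>i S. i < n \<Longrightarrow> S \<in> sets (MX \<Otimes>\<^sub>M MY) \<Longrightarrow>
        measure M {\<omega> \<in> space M. A i \<omega> \<and> (X i \<omega>, Y i \<omega>) \<in> S}
      = (\<integral>\<omega>. indicator S (X i \<omega>, Y i \<omega>) * p (X i \<omega>) \<partial>M)"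
    and xi_indep: "prob_space.indep_set M
        (sets (vimage_algebra (space M) (\<lambda>\<omega>. \<lambda>i\<in>{..<n}. (X i \<omega>, Y i \<omega>, A i \<omega>))
           (\<Pi>\<^sub>M i\<in>{..<n}. MX \<Otimes>\<^sub>M MY \<Otimes>\<^sub>M count_space (UNIV :: bool set))))
        (sets (vimage_algebra (space M) xi MR))"
    and g_meas: "\<And>b a i. (\<lambda>r. g b a r i) \<in> measurable MR (count_space UNIV)"
  shows "\<forall>(b :: nat \<Rightarrow> int) (a :: nat \<Rightarrow> bool).
     (1 - alpha - eps) *
       measure M {\<omega> \<in> space M. \<forall>i<n. bin_of eps (p (X i \<omega>)) = b i \<and> A i \<omega> = a i}
     \<le> (\<integral>\<omega>. cov_U alpha n
              (g (\<lambda>i\<in>{..<n}. bin_of eps (p (X i \<omega>))) (\<lambda>i\<in>{..<n}. A i \<omega>) (xi \<omega>))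
              (\<lambda>i. bin_of eps (p (X i \<omega>))) (\<lambda>i. A i \<omega>) s (\<lambda>i. X i \<omega>) (\<lambda>i. Y i \<omega>)
            * indicator {\<omega> \<in> space M. \<forall>i<n. bin_of eps (p (X i \<omega>)) = b i \<and> A i \<omega> = a i} \<omega>
          \<partial>M)"
  proof -
  interpret mt5 M MX MY X Y A p s n alpha eps
    by (rule mt5.intro) (fact P alpha eps p_meas p_range s_meas X_rv Y_rv A_rv iid_indep iid_ident mar)+
  show ?thesis
    by (intro allI) (rule main[OF xi_rv xi_indep g_meas])
qed

end
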